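(* For every integer $s\ge0$ there is a positive constant $C$ such that for every smooth function $\psi$ on $\mathbb{R}\times\mathbb{R}^2$, $$|\Gamma\psi(t,x)|_s\le C|x|\,|\psi(t,x)|_{Z,s}+C\langle t-|x|\rangle|\partial\psi(t,x)|_s$$ for all $(t,x)$ with $x\ne0$.
   Context: $\partial_0=\partial_t$, $\partial_j=\partial/\partial x_j$; $\partial\psi=(\partial_0\psi,\partial_1\psi,\partial_2\psi)$. $S=t\partial_t+x_1\partial_1+x_2\partial_2$, $L_j=t\partial_j+x_j\partial_t$ ($j=1,2$), $\Omega=x_1\partial_2-x_2\partial_1$, $\Gamma=(\Gamma_0,\dots,\Gamma_6)=(S,L_1,L_2,\Omega,\partial_0,\partial_1,\partial_2)$, $\Gamma^\alpha=\Gamma_0^{\alpha_0}\cdots\Gamma_6^{\alpha_6}$, $|\phi|_s=\sum_{|\alpha|\le s}|\Gamma^\alpha\phi|$ (for vector-valued $\phi$ such as $\Gamma\psi$ or $\partial\psi$, sum of absolute values of components). $Z_k=\frac{x_k}{|x|}\partial_t+\partial_k$ ($k=1,2$, $x\ne0$), and $|\psi(t,x)|_{Z,s}=\sum_{k=1}^2\sum_{|\alpha|\le s}|Z_k\Gamma^\alpha\psi(t,x)|$. $\langle y\rangle=(1+|y|^2)^{1/2}$. *)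

theory Defs
  imports "HOL-Analysis.Analysis"
begin

type_synonym pt = "real \<times> real \<times> real"

definition dirv :: "nat \<Rightarrow> pt" where
  "dirv i = (if i = 0 then (1,0,0) else if i = 1 then (0,1,0) else (0,0,1))"

text \<open>Partial derivative in coordinate i (0 = t, 1 = x1, 2 = x2).\<close>
definition pd :: "nat \<Rightarrow> (pt \<Rightarrow> real) \<Rightarrow> (pt \<Rightarrow> real)" where
  "pd i f p = deriv (\<lambda>h. f (p + h *\<^sub>R dirv i)) 0"

fun iter_pd :: "nat list \<Rightarrow> (pt \<Rightarrow> real) \<Rightarrow> (pt \<Rightarrow> real)" where
  "iter_pd [] f = f"
| "iter_pd (i # is) f = pd i (iter_pd is f)"

definition smooth3 :: "(pt \<Rightarrow> real) \<Rightarrow> bool" where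
  "smooth3 f \<longleftrightarrow> (\<forall>is. set is \<subseteq> {0,1,2} \<longrightarrow>
                     (\<forall>p. iter_pd is f differentiable (at p)))"

definition tco :: "pt \<Rightarrow> real" where "tco p = fst p"
definition x1co :: "pt \<Rightarrow> real" where "x1co p = fst (snd p)"
definition x2co :: "pt \<Rightarrow> real" where "x2co p = snd (snd p)"
definition xnorm :: "pt \<Rightarrow> real" where "xnorm p = sqrt ((x1co p)\<^sup>2 + (x2co p)\<^sup>2)"

text \<open>The vector fields Gamma_0..Gamma_6 = S, L1, L2, Omega, d_0, d_1, d_2.\<close>
definition Gam :: "nat \<Rightarrow> (pt \<Rightarrow> real) \<Rightarrow> (pt \<Rightarrow> real)" where
  "Gam k f = (\<lambda>p.
     if k = 0 then tco p * pd 0 f p + x1co p * pd 1 f p + x2co p * pd 2 f p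
     else if k = 1 then tco p * pd 1 f p + x1co p * pd 0 f p
     else if k = 2 then tco p * pd 2 f p + x2co p * pd 0 f p
     else if k = 3 then x1co p * pd 2 f p - x2co p * pd 1 f p
     else if k = 4 then pd 0 f p
     else if k = 5 then pd 1 f p
     else pd 2 f p)"

definition multi :: "nat \<Rightarrow> (nat \<Rightarrow> nat) set" where
  "multi s = {\<alpha>. (\<forall>k\<ge>7. \<alpha> k = 0) \<and> (\<Sum>k<7. \<alpha> k) \<le> s}"

definition GamA :: "(nat \<Rightarrow> nat) \<Rightarrow> (pt \<Rightarrow> real) \<Rightarrow> (pt \<Rightarrow> real)" where
  "GamA \<alpha> f = foldr (\<lambda>k g. (Gam k ^^ \<alpha> k) g) [0..<7] f"

definition normS :: "nat \<Rightarrow> (pt \<Rightarrow> real) \<Rightarrow> pt \<Rightarrow> real" where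
  "normS s f p = (\<Sum>\<alpha>\<in>multi s. \<bar>GamA \<alpha> f p\<bar>)"

definition GamNormS :: "nat \<Rightarrow> (pt \<Rightarrow> real) \<Rightarrow> pt \<Rightarrow> real" where
  "GamNormS s f p = (\<Sum>j<7. normS s (Gam j f) p)"

definition DNormS :: "nat \<Rightarrow> (pt \<Rightarrow> real) \<Rightarrow> pt \<Rightarrow> real" where
  "DNormS s f p = (\<Sum>j<3. normS s (pd j f) p)"

definition Zf :: "nat \<Rightarrow> (pt \<Rightarrow> real) \<Rightarrow> (pt \<Rightarrow> real)" where
  "Zf k f = (\<lambda>p. (if k = 1 then x1co p else x2co p) / xnorm p * pd 0 f p + pd k f p)"

definition ZNormS :: "nat \<Rightarrow> (pt \<Rightarrow> real) \<Rightarrow> pt \<Rightarrow> real" where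
  "ZNormS s f p = (\<Sum>k\<in>{1,2}. \<Sum>\<alpha>\<in>multi s. \<bar>Zf k (GamA \<alpha> f) p\<bar>)"

definition jbr :: "real \<Rightarrow> real" where "jbr y = sqrt (1 + y\<^sup>2)"

end

theory Submission
  imports Defs
begin


lemma dir_deriv:
  assumes "f differentiable (at (P + u *\<^sub>R v))"
  shows "((\<lambda>h. f (P + h *\<^sub>R v)) has_real_derivative (frechet_derivative f (at (P + u *\<^sub>R v))) v) (at u)"
proof -
  let ?F = "frechet_derivative f (at (P + u *\<^sub>R v))"
  have F: "(f has_derivative ?F) (at (P + u *\<^sub>R v))"
    using assms frechet_derivative_works by blast
  have g: "((\<lambda>h. P + h *\<^sub>R v) has_derivative (\<lambda>h. h *\<^sub>R v)) (at u)"
    by (auto intro!: derivative_eq_intros)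
  have "((\<lambda>h. f (P + h *\<^sub>R v)) has_derivative (\<lambda>h. ?F (h *\<^sub>R v))) (at u)"
    using has_derivative_compose[OF g F] by (simp add: o_def)
  moreover have "linear ?F" using F has_derivative_linear by blast
  moreover have "(\<lambda>h. h * ?F v) = (*) (?F v)" by (auto simp: fun_eq_iff)
  ultimately show ?thesis
    unfolding has_field_derivative_def
    by (simp add: linear_cmul)
qed

lemma pd_frechet:
  assumes "f differentiable (at P)"
  shows "pd i f P = frechet_derivative f (at P) (dirv i)"
proof -
  have "((\<lambda>h. f (P + h *\<^sub>R dirv i)) has_real_derivative (frechet_derivative f (at P)) (dirv i)) (at 0)"
    using dir_deriv[of f P 0 "dirv i"] assms by simp
  then show ?thesis unfolding pd_def by (rule DERIV_imp_deriv)
qed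

lemma pd_line:
  assumes "f differentiable (at (P + u *\<^sub>R dirv i))"
  shows "((\<lambda>h. f (P + h *\<^sub>R dirv i)) has_real_derivative pd i f (P + u *\<^sub>R dirv i)) (at u)"
  using dir_deriv[OF assms] pd_frechet[OF assms] by simp

lemma pd_at0:
  assumes "f differentiable (at P)"
  shows "((\<lambda>h. f (P + h *\<^sub>R dirv i)) has_real_derivative pd i f P) (at 0)"
  using pd_line[of f P 0 i] assms by simp

lemma pd_add:
  assumes "f differentiable (at P)" "g differentiable (at P)"
  shows "pd i (\<lambda>q. f q + g q) P = pd i f P + pd i g P"
  unfolding pd_def[of i "\<lambda>q. f q + g q"]
  by (rule DERIV_imp_deriv, rule DERIV_add, rule pd_at0[OF assms(1)], rule pd_at0[OF assms(2)])

lemma pd_cmult: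
  assumes "f differentiable (at P)"
  shows "pd i (\<lambda>q. c * f q) P = c * pd i f P"
  unfolding pd_def[of i "\<lambda>q. c * f q"]
  by (rule DERIV_imp_deriv, rule DERIV_cmult, rule pd_at0[OF assms(1)])

lemma pd_mult:
  assumes "f differentiable (at P)" "g differentiable (at P)"
  shows "pd i (\<lambda>q. f q * g q) P = pd i f P * g P + f P * pd i g P"
proof -
  have "((\<lambda>h. f (P + h *\<^sub>R dirv i) * g (P + h *\<^sub>R dirv i)) has_real_derivative
     pd i f P * g P + f P * pd i g P) (at 0)"
    using DERIV_mult[OF pd_at0[OF assms(1)] pd_at0[OF assms(2)]] by (simp add: mult.commute)
  then show ?thesis unfolding pd_def[of i "\<lambda>q. f q * g q"] by (simp add: DERIV_imp_deriv)
qed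

lemma pd_const: "pd i (\<lambda>q. c) P = 0"
  unfolding pd_def by simp

definition lin :: "real \<Rightarrow> real \<Rightarrow> real \<Rightarrow> real \<Rightarrow> pt \<Rightarrow> real" where
  "lin a b c d p = a * tco p + b * x1co p + c * x2co p + d"

lemma tco_hd: "(tco has_derivative tco) (at P)"
  unfolding tco_def by (auto intro!: derivative_eq_intros)
lemma x1co_hd: "(x1co has_derivative x1co) (at P)"
  unfolding x1co_def by (auto intro!: derivative_eq_intros)
lemma x2co_hd: "(x2co has_derivative x2co) (at P)"
  unfolding x2co_def by (auto intro!: derivative_eq_intros)

lemma lin_diff: "lin a b c d differentiable (at P)"
proof -
  have "(lin a b c d has_derivative (\<lambda>p. a * tco p + b * x1co p + c * x2co p)) (at P)"
    unfolding lin_def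
    by (auto intro!: derivative_eq_intros tco_hd x1co_hd x2co_hd)
  then show ?thesis unfolding differentiable_def by blast
qed

lemma pd_lin: "pd i (lin a b c d) P = (if i = 0 then a else if i = 1 then b else c)"
proof -
  have "(\<lambda>h. lin a b c d (P + h *\<^sub>R dirv i)) = (\<lambda>h. lin a b c d P + h * (if i = 0 then a else if i = 1 then b else c))"
    by (auto simp: fun_eq_iff lin_def dirv_def tco_def x1co_def x2co_def algebra_simps)
  moreover have "((\<lambda>h. lin a b c d P + h * (if i = 0 then a else if i = 1 then b else c)) has_real_derivative
       (if i = 0 then a else if i = 1 then b else c)) (at 0)"
    by (auto intro!: derivative_eq_intros)
  ultimately show ?thesis unfolding pd_def by (simp add: DERIV_imp_deriv)
qed


lemma iter_pd_app: "iter_pd (ks @ js) f = iter_pd ks (iter_pd js f)"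
  by (induction ks) auto



lemma pd_ge2: "i \<ge> 2 \<Longrightarrow> pd i = pd 2"
  by (auto simp: fun_eq_iff pd_def dirv_def)

lemma smooth_iter_diff: assumes "smooth3 f" "set js \<subseteq> {0,1,2}" shows "iter_pd js f differentiable (at p)"
proof -
  have "set js \<subseteq> {0,1,2} \<longrightarrow> (\<forall>p. iter_pd js f differentiable (at p))"
    using assms(1) unfolding smooth3_def by (rule spec)
  then have "\<forall>p. iter_pd js f differentiable (at p)" using assms(2) by (rule mp)
  then show ?thesis by (rule spec)
qed

lemma smooth_diff: assumes "smooth3 f" shows "f differentiable (at p)"
  using smooth_iter_diff[OF assms, of "[]"] by simp

lemma smooth_iter: assumes "smooth3 f" "set js \<subseteq> {0,1,2}" shows "smooth3 (iter_pd js f)"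
  unfolding smooth3_def
proof (intro allI impI)
  fix ks :: "nat list" and p assume "set ks \<subseteq> {0,1,2}"
  then have "set (ks @ js) \<subseteq> {0,1,2}" using assms(2) by simp
  then have "iter_pd (ks @ js) f differentiable (at p)" by (rule smooth_iter_diff[OF assms(1)])
  then show "iter_pd ks (iter_pd js f) differentiable (at p)" by (simp add: iter_pd_app)
qed

lemma smooth_pd: "smooth3 f \<Longrightarrow> smooth3 (pd i f)"
proof -
  assume f: "smooth3 f"
  define j where "j = min i 2"
  have e: "pd i = pd j" using pd_ge2[of i] by (cases "i \<ge> 2") (simp_all add: j_def)
  have "j \<le> 2" by (simp add: j_def)
  then have "set [j] \<subseteq> {0,1,2}" by (simp; arith)
  from smooth_iter[OF f this] show ?thesis unfolding e by simp
qed

lemma smooth_pd_diff: "smooth3 f \<Longrightarrow> pd i f differentiable (at p)"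
  by (rule smooth_diff, rule smooth_pd)

lemma pd_const_fun: "pd i (\<lambda>q. c) = (\<lambda>q. 0)"
  by (rule ext) (rule pd_const)

lemma iter_pd_zero: "iter_pd js (\<lambda>q. 0) = (\<lambda>q. 0)"
  by (induction js) (simp_all add: pd_const_fun)

lemma smooth_zero: "smooth3 (\<lambda>q. 0)"
  unfolding smooth3_def iter_pd_zero by (intro allI impI differentiable_const)

lemma iter_pd_add: "smooth3 f \<Longrightarrow> smooth3 g \<Longrightarrow> set js \<subseteq> {0,1,2} \<Longrightarrow>
   iter_pd js (\<lambda>q. f q + g q) = (\<lambda>q. iter_pd js f q + iter_pd js g q)"
proof (induction js)
  case Nil then show ?case by simp
next
  case (Cons i js)
  have s: "set js \<subseteq> {0,1,2}" using Cons.prems by simp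
  have IH: "iter_pd js (\<lambda>q. f q + g q) = (\<lambda>q. iter_pd js f q + iter_pd js g q)"
    by (rule Cons.IH[OF Cons.prems(1,2) s])
  show ?case
    unfolding iter_pd.simps IH
    by (rule ext, rule pd_add, (rule smooth_iter_diff, rule Cons.prems, rule s)+)
qed

lemma smooth_add: assumes f: "smooth3 f" and g: "smooth3 g" shows "smooth3 (\<lambda>q. f q + g q)"
  unfolding smooth3_def[of "\<lambda>q. f q + g q"]
proof (intro allI impI)
  fix js :: "nat list" and p assume s: "set js \<subseteq> {0,1,2}"
  show "iter_pd js (\<lambda>q. f q + g q) differentiable at p"
    unfolding iter_pd_add[OF f g s]
    by (intro differentiable_add smooth_iter_diff f g s)
qed

lemma iter_pd_cmult: "smooth3 f \<Longrightarrow> set js \<subseteq> {0,1,2} \<Longrightarrow>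
   iter_pd js (\<lambda>q. c * f q) = (\<lambda>q. c * iter_pd js f q)"
proof (induction js)
  case Nil then show ?case by simp
next
  case (Cons i js)
  have s: "set js \<subseteq> {0,1,2}" using Cons.prems by simp
  have IH: "iter_pd js (\<lambda>q. c * f q) = (\<lambda>q. c * iter_pd js f q)"
    by (rule Cons.IH[OF Cons.prems(1) s])
  show ?case
    unfolding iter_pd.simps IH
    by (rule ext, rule pd_cmult, rule smooth_iter_diff, rule Cons.prems, rule s)
qed

lemma smooth_cmult: assumes f: "smooth3 f" shows "smooth3 (\<lambda>q. c * f q)"
  unfolding smooth3_def[of "\<lambda>q. c * f q"]
proof (intro allI impI)
  fix js :: "nat list" and p assume s: "set js \<subseteq> {0,1,2}"
  show "iter_pd js (\<lambda>q. c * f q) differentiable at p"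
    unfolding iter_pd_cmult[OF f s]
    by (intro differentiable_mult differentiable_const smooth_iter_diff f s)
qed



lemma iter_pd_lin_mult:
  "set js \<subseteq> {0,1,2} \<Longrightarrow> smooth3 f \<Longrightarrow>
   \<exists>g. smooth3 g \<and> iter_pd js (\<lambda>q. lin a b c d q * f q) = (\<lambda>q. lin a b c d q * iter_pd js f q + g q)"
proof (induction js)
  case Nil then show ?case by (intro exI[of _ "\<lambda>q. 0"]) (simp add: smooth_zero)
next
  case (Cons i js)
  have s: "set js \<subseteq> {0,1,2}" using Cons.prems by simp
  obtain g where g: "smooth3 g"
     "iter_pd js (\<lambda>q. lin a b c d q * f q) = (\<lambda>q. lin a b c d q * iter_pd js f q + g q)"
    using Cons.IH[OF s Cons.prems(2)] by metis
  let ?h = "iter_pd js f"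
  have h: "smooth3 ?h" using Cons.prems(2) s by (rule smooth_iter)
  let ?L = "if i = 0 then a else if i = 1 then b else c"
  have eq: "pd i (\<lambda>q. lin a b c d q * ?h q + g q) = (\<lambda>q. lin a b c d q * pd i ?h q + (?L * ?h q + pd i g q))"
  proof (rule ext)
    fix q
    have "pd i (\<lambda>q. lin a b c d q * ?h q + g q) q = pd i (\<lambda>q. lin a b c d q * ?h q) q + pd i g q"
      by (rule pd_add) (intro differentiable_mult lin_diff smooth_diff h g)+
    also have "pd i (\<lambda>q. lin a b c d q * ?h q) q = ?L * ?h q + lin a b c d q * pd i ?h q"
      by (subst pd_mult) (simp_all add: pd_lin lin_diff smooth_diff[OF h])
    finally show "pd i (\<lambda>q. lin a b c d q * ?h q + g q) q = lin a b c d q * pd i ?h q + (?L * ?h q + pd i g q)"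
      by simp
  qed
  have sm: "smooth3 (\<lambda>q. ?L * ?h q + pd i g q)"
    by (intro smooth_add smooth_cmult smooth_pd h g)
  show ?case unfolding iter_pd.simps g(2) eq
    by (rule exI[of _ "\<lambda>q. ?L * ?h q + pd i g q"], rule conjI[OF sm refl])
qed

lemma smooth_lin_mult: assumes f: "smooth3 f" shows "smooth3 (\<lambda>q. lin a b c d q * f q)"
  unfolding smooth3_def[of "\<lambda>q. lin a b c d q * f q"]
proof (intro allI impI)
  fix js :: "nat list" and p assume s: "set js \<subseteq> {0,1,2}"
  obtain g where g: "smooth3 g"
     "iter_pd js (\<lambda>q. lin a b c d q * f q) = (\<lambda>q. lin a b c d q * iter_pd js f q + g q)"
    using iter_pd_lin_mult[OF s f] by metis
  show "iter_pd js (\<lambda>q. lin a b c d q * f q) differentiable at p"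
    unfolding g(2)
    by (intro differentiable_add differentiable_mult lin_diff smooth_iter_diff f s smooth_diff g(1))
qed


lemma norm_dirv: "norm (dirv i) = 1"
  unfolding dirv_def by (simp add: norm_Pair)

lemma mixed_mvt:
  assumes f: "smooth3 f" and h: "0 < h"
  shows "\<exists>\<xi> \<eta>. 0 < \<xi> \<and> \<xi> < h \<and> 0 < \<eta> \<and> \<eta> < h \<and>
     f (p + h *\<^sub>R dirv i + h *\<^sub>R dirv j) - f (p + h *\<^sub>R dirv i) - f (p + h *\<^sub>R dirv j) + f p
       = h * (h * pd j (pd i f) (p + \<xi> *\<^sub>R dirv i + \<eta> *\<^sub>R dirv j))"
proof -
  let ?u = "dirv i" and ?v = "dirv j"
  define \<phi> where "\<phi> s = f (p + h *\<^sub>R ?v + s *\<^sub>R ?u) - f (p + s *\<^sub>R ?u)" for s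
  have d\<phi>: "DERIV \<phi> s :> pd i f (p + h *\<^sub>R ?v + s *\<^sub>R ?u) - pd i f (p + s *\<^sub>R ?u)" for s
    unfolding \<phi>_def
    by (intro DERIV_diff pd_line smooth_diff f)
  obtain \<xi> where \<xi>: "0 < \<xi>" "\<xi> < h" "\<phi> h - \<phi> 0 = (h - 0) * (pd i f (p + h *\<^sub>R ?v + \<xi> *\<^sub>R ?u) - pd i f (p + \<xi> *\<^sub>R ?u))"
    using MVT2[OF h d\<phi>] by blast
  define \<psi> where "\<psi> w = pd i f (p + \<xi> *\<^sub>R ?u + w *\<^sub>R ?v)" for w
  have d\<psi>: "DERIV \<psi> w :> pd j (pd i f) (p + \<xi> *\<^sub>R ?u + w *\<^sub>R ?v)" for w
    unfolding \<psi>_def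
    by (intro pd_line smooth_diff smooth_pd f)
  obtain \<eta> where \<eta>: "0 < \<eta>" "\<eta> < h" "\<psi> h - \<psi> 0 = (h - 0) * pd j (pd i f) (p + \<xi> *\<^sub>R ?u + \<eta> *\<^sub>R ?v)"
    using MVT2[OF h d\<psi>] by blast
  have e1: "p + h *\<^sub>R ?v + \<xi> *\<^sub>R ?u = p + \<xi> *\<^sub>R ?u + h *\<^sub>R ?v"
    by (simp add: algebra_simps)
  have e2: "p + h *\<^sub>R ?v + h *\<^sub>R ?u = p + h *\<^sub>R ?u + h *\<^sub>R ?v"
    by (simp add: algebra_simps)
  have "f (p + h *\<^sub>R ?u + h *\<^sub>R ?v) - f (p + h *\<^sub>R ?u) - f (p + h *\<^sub>R ?v) + f p = \<phi> h - \<phi> 0"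
    unfolding \<phi>_def e2 by simp
  also have "\<dots> = h * (\<psi> h - \<psi> 0)"
    using \<xi>(3) unfolding \<psi>_def e1 by simp
  also have "\<dots> = h * (h * pd j (pd i f) (p + \<xi> *\<^sub>R ?u + \<eta> *\<^sub>R ?v))"
    using \<eta>(3) by simp
  finally show ?thesis using \<xi> \<eta> by blast
qed

lemma aux_abs: "(a::real) = b \<Longrightarrow> \<bar>a - x\<bar> < \<bar>x - y\<bar> / 2 \<Longrightarrow> \<bar>b - y\<bar> < \<bar>x - y\<bar> / 2 \<Longrightarrow> False"
proof -
  assume ab: "a = b" and 1: "\<bar>a - x\<bar> < \<bar>x - y\<bar> / 2" and 2: "\<bar>b - y\<bar> < \<bar>x - y\<bar> / 2"
  have "\<bar>x - y\<bar> = \<bar>(b - y) - (a - x)\<bar>" using ab by simp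
  also have "\<dots> \<le> \<bar>b - y\<bar> + \<bar>a - x\<bar>" by (rule abs_triangle_ineq4)
  finally have le: "\<bar>x - y\<bar> \<le> \<bar>b - y\<bar> + \<bar>a - x\<bar>" .
  have "\<bar>b - y\<bar> + \<bar>a - x\<bar> < \<bar>x - y\<bar> / 2 + \<bar>x - y\<bar> / 2" by (rule add_strict_mono[OF 2 1])
  then have "\<bar>b - y\<bar> + \<bar>a - x\<bar> < \<bar>x - y\<bar>" by simp
  with le show False by simp
qed

lemma clairaut:
  assumes f: "smooth3 f"
  shows "pd j (pd i f) p = pd i (pd j f) p"
proof (rule ccontr)
  let ?G1 = "pd j (pd i f)" and ?G2 = "pd i (pd j f)"
  assume ne: "?G1 p \<noteq> ?G2 p"
  define e where "e = \<bar>?G1 p - ?G2 p\<bar> / 2"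
  have e: "e > 0" using ne by (simp add: e_def)
  have c1: "continuous (at p) ?G1"
    by (intro differentiable_imp_continuous_within smooth_diff smooth_pd f)
  have c2: "continuous (at p) ?G2"
    by (intro differentiable_imp_continuous_within smooth_diff smooth_pd f)
  obtain d1 where d1: "d1 > 0" "\<And>x'. dist x' p < d1 \<Longrightarrow> dist (?G1 x') (?G1 p) < e"
    using c1 e unfolding continuous_at_eps_delta by blast
  obtain d2 where d2: "d2 > 0" "\<And>x'. dist x' p < d2 \<Longrightarrow> dist (?G2 x') (?G2 p) < e"
    using c2 e unfolding continuous_at_eps_delta by blast
  define h where "h = min d1 d2 / 4"
  have h: "h > 0" using d1 d2 by (simp add: h_def)
  obtain \<xi> \<eta> where A: "0 < \<xi>" "\<xi> < h" "0 < \<eta>" "\<eta> < h"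
     "f (p + h *\<^sub>R dirv i + h *\<^sub>R dirv j) - f (p + h *\<^sub>R dirv i) - f (p + h *\<^sub>R dirv j) + f p
       = h * (h * ?G1 (p + \<xi> *\<^sub>R dirv i + \<eta> *\<^sub>R dirv j))"
    using mixed_mvt[OF f h, of p i j] by blast
  obtain \<xi>' \<eta>' where B: "0 < \<xi>'" "\<xi>' < h" "0 < \<eta>'" "\<eta>' < h"
     "f (p + h *\<^sub>R dirv j + h *\<^sub>R dirv i) - f (p + h *\<^sub>R dirv j) - f (p + h *\<^sub>R dirv i) + f p
       = h * (h * ?G2 (p + \<xi>' *\<^sub>R dirv j + \<eta>' *\<^sub>R dirv i))"
    using mixed_mvt[OF f h, of p j i] by blast
  let ?q1 = "p + \<xi> *\<^sub>R dirv i + \<eta> *\<^sub>R dirv j"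
  let ?q2 = "p + \<xi>' *\<^sub>R dirv j + \<eta>' *\<^sub>R dirv i"
  have sw: "p + h *\<^sub>R dirv j + h *\<^sub>R dirv i = p + h *\<^sub>R dirv i + h *\<^sub>R dirv j"
    by (simp add: algebra_simps)
  have "h * (h * ?G1 ?q1) = h * (h * ?G2 ?q2)"
    using A(5) B(5) unfolding sw by linarith
  then have eq: "?G1 ?q1 = ?G2 ?q2" using h by simp
  have "dist ?q1 p = norm (\<xi> *\<^sub>R dirv i + \<eta> *\<^sub>R dirv j)"
    by (simp add: dist_norm algebra_simps)
  also have "\<dots> \<le> norm (\<xi> *\<^sub>R dirv i) + norm (\<eta> *\<^sub>R dirv j)" by (rule norm_triangle_ineq)
  also have "\<dots> = \<xi> + \<eta>" using A by (simp add: norm_dirv)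
  finally have q1: "dist ?q1 p < d1" using A d1 d2 unfolding h_def by linarith
  have "dist ?q2 p = norm (\<xi>' *\<^sub>R dirv j + \<eta>' *\<^sub>R dirv i)"
    by (simp add: dist_norm algebra_simps)
  also have "\<dots> \<le> norm (\<xi>' *\<^sub>R dirv j) + norm (\<eta>' *\<^sub>R dirv i)" by (rule norm_triangle_ineq)
  also have "\<dots> = \<xi>' + \<eta>'" using B by (simp add: norm_dirv)
  finally have q2: "dist ?q2 p < d2" using B d1 d2 unfolding h_def by linarith
  have 1: "\<bar>?G1 ?q1 - ?G1 p\<bar> < e" using d1(2)[OF q1] by (simp add: dist_real_def)
  have 2: "\<bar>?G2 ?q2 - ?G2 p\<bar> < e" using d2(2)[OF q2] by (simp add: dist_real_def)
  show False using aux_abs[OF eq 1[unfolded e_def] 2[unfolded e_def]] .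
qed


definition Acoef :: "nat \<Rightarrow> nat \<Rightarrow> pt \<Rightarrow> real" where
 "Acoef k j = (if k = 0 then (if j = 0 then lin 1 0 0 0 else if j = 1 then lin 0 1 0 0 else lin 0 0 1 0)
   else if k = 1 then (if j = 0 then lin 0 1 0 0 else if j = 1 then lin 1 0 0 0 else lin 0 0 0 0)
   else if k = 2 then (if j = 0 then lin 0 0 1 0 else if j = 1 then lin 0 0 0 0 else lin 1 0 0 0)
   else if k = 3 then (if j = 0 then lin 0 0 0 0 else if j = 1 then lin 0 0 (-1) 0 else lin 0 1 0 0)
   else if k = 4 then (if j = 0 then lin 0 0 0 1 else lin 0 0 0 0)
   else if k = 5 then (if j = 1 then lin 0 0 0 1 else lin 0 0 0 0)
   else (if j = 2 then lin 0 0 0 1 else lin 0 0 0 0))"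

lemma Acoef_lin: "\<exists>a b c d. Acoef k j = lin a b c d"
  unfolding Acoef_def by (simp split: if_split; blast)

lemma Acoef_diff: "Acoef k j differentiable (at p)"
  using Acoef_lin[of k j] lin_diff by metis

lemma Gam_A: "Gam k f p = Acoef k 0 p * pd 0 f p + Acoef k 1 p * pd 1 f p + Acoef k 2 p * pd 2 f p"
proof -
  consider "k = 0" | "k = 1" | "k = 2" | "k = 3" | "k = 4" | "k = 5" | "k \<ge> 6" by arith
  then show ?thesis
    by cases (simp_all add: Gam_def Acoef_def lin_def)
qed

lemma Gam_fun: "Gam k f = (\<lambda>p. Acoef k 0 p * pd 0 f p + Acoef k 1 p * pd 1 f p + Acoef k 2 p * pd 2 f p)"
  by (rule ext) (rule Gam_A)

lemma smooth_Acoef_mult: "smooth3 g \<Longrightarrow> smooth3 (\<lambda>q. Acoef k j q * g q)"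
  using Acoef_lin[of k j] smooth_lin_mult by metis

lemma smooth_Gam: assumes f: "smooth3 f" shows "smooth3 (Gam k f)"
  unfolding Gam_fun
  by (intro smooth_add smooth_Acoef_mult smooth_pd f)

lemma pd_Gam: assumes f: "smooth3 f"
  shows "pd i (Gam k f) p =
    (pd i (Acoef k 0) p * pd 0 f p + Acoef k 0 p * pd i (pd 0 f) p) +
    (pd i (Acoef k 1) p * pd 1 f p + Acoef k 1 p * pd i (pd 1 f) p) +
    (pd i (Acoef k 2) p * pd 2 f p + Acoef k 2 p * pd i (pd 2 f) p)"
  unfolding Gam_fun
  by (simp add: pd_add pd_mult Acoef_diff smooth_pd_diff f)


definition brtab :: "((nat \<times> nat) \<times> (real \<times> nat)) list" where
  "brtab = [((0::nat, 4::nat), (-1::real, 4::nat)), ((0::nat, 5::nat), (-1::real, 5::nat)), ((0::nat, 6::nat), (-1::real, 6::nat)), ((1::nat, 2::nat), (1::real, 3::nat)), ((1::nat, 3::nat), (1::real, 2::nat)), ((1::nat, 4::nat), (-1::real, 5::nat)), ((1::nat, 5::nat), (-1::real, 4::nat)), ((2::nat, 1::nat), (-1::real, 3::nat)), ((2::nat, 3::nat), (-1::real, 1::nat)), ((2::nat, 4::nat), (-1::real, 6::nat)), ((2::nat, 6::nat), (-1::real, 4::nat)), ((3::nat, 1::nat), (-1::real, 2::nat)), ((3::nat, 2::nat), (1::real, 1::nat)), ((3::nat, 5::nat), (-1::real, 6::nat)), ((3::nat, 6::nat), (1::real, 5::nat)), ((4::nat, 0::nat), (1::real, 4::nat)), ((4::nat,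 1::nat), (1::real, 5::nat)), ((4::nat, 2::nat), (1::real, 6::nat)), ((5::nat, 0::nat), (1::real, 5::nat)), ((5::nat, 1::nat), (1::real, 4::nat)), ((5::nat, 3::nat), (1::real, 6::nat)), ((6::nat, 0::nat), (1::real, 6::nat)), ((6::nat, 2::nat), (1::real, 4::nat)), ((6::nat, 3::nat), (-1::real, 5::nat))]"

definition br :: "nat \<Rightarrow> nat \<Rightarrow> real \<times> nat" where
  "br a b = (case map_of brtab (a, b) of None \<Rightarrow> (0, 0) | Some v \<Rightarrow> v)"

lemma brtab_props: "\<forall>x\<in>set brtab. \<bar>fst (snd x)\<bar> \<le> 1 \<and> snd (snd x) < 7"
  unfolding brtab_def by simp

lemma br_props: "\<bar>fst (br a b)\<bar> \<le> 1 \<and> snd (br a b) < 7"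
proof (cases "map_of brtab (a, b)")
  case None then show ?thesis by (simp add: br_def)
next
  case (Some v)
  then have "((a, b), v) \<in> set brtab" by (rule map_of_SomeD)
  then show ?thesis using brtab_props Some by (auto simp: br_def)
qed

lemma br_abs: "\<bar>fst (br a b)\<bar> \<le> 1" using br_props by blast
lemma br_snd: "snd (br a b) < 7" using br_props by blast

lemma "br 2 3 = (-1, 1)" by (simp add: br_def brtab_def)


lemma commutator:
  assumes f: "smooth3 f" and a: "a < 7" and b: "b < 7"
  shows "Gam a (Gam b f) p = Gam b (Gam a f) p + fst (br a b) * Gam (snd (br a b)) f p"
proof -
  have c1: "pd 1 (pd 0 f) p = pd 0 (pd 1 f) p" by (rule clairaut[OF f])
  have c2: "pd 2 (pd 0 f) p = pd 0 (pd 2 f) p" by (rule clairaut[OF f])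
  have c3: "pd 2 (pd 1 f) p = pd 1 (pd 2 f) p" by (rule clairaut[OF f])
  have G: "Gam a (Gam b f) p - Gam b (Gam a f) p =
     (Acoef a 0 p * pd 0 (Acoef b 0) p + Acoef a 1 p * pd 1 (Acoef b 0) p + Acoef a 2 p * pd 2 (Acoef b 0) p
      - Acoef b 0 p * pd 0 (Acoef a 0) p - Acoef b 1 p * pd 1 (Acoef a 0) p - Acoef b 2 p * pd 2 (Acoef a 0) p) * pd 0 f p
   + (Acoef a 0 p * pd 0 (Acoef b 1) p + Acoef a 1 p * pd 1 (Acoef b 1) p + Acoef a 2 p * pd 2 (Acoef b 1) p
      - Acoef b 0 p * pd 0 (Acoef a 1) p - Acoef b 1 p * pd 1 (Acoef a 1) p - Acoef b 2 p * pd 2 (Acoef a 1) p) * pd 1 f p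
   + (Acoef a 0 p * pd 0 (Acoef b 2) p + Acoef a 1 p * pd 1 (Acoef b 2) p + Acoef a 2 p * pd 2 (Acoef b 2) p
      - Acoef b 0 p * pd 0 (Acoef a 2) p - Acoef b 1 p * pd 1 (Acoef a 2) p - Acoef b 2 p * pd 2 (Acoef a 2) p) * pd 2 f p"
    unfolding Gam_A[of a "Gam b f"] Gam_A[of b "Gam a f"] pd_Gam[OF f] c1 c2 c3
    by (simp add: algebra_simps)
  have ca: "a = 0 \<or> a = 1 \<or> a = 2 \<or> a = 3 \<or> a = 4 \<or> a = 5 \<or> a = 6" using a by arith
  have cb: "b = 0 \<or> b = 1 \<or> b = 2 \<or> b = 3 \<or> b = 4 \<or> b = 5 \<or> b = 6" using b by arith
  have "Gam a (Gam b f) p - Gam b (Gam a f) p = fst (br a b) * Gam (snd (br a b)) f p"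
    unfolding G Gam_A[of "snd (br a b)"]
    using ca cb
    by (elim disjE; simp add: Acoef_def pd_lin lin_def br_def brtab_def algebra_simps)
  then show ?thesis by simp
qed


lemma Gam_add:
  assumes "\<And>p. f differentiable (at p)" "\<And>p. g differentiable (at p)"
  shows "Gam k (\<lambda>q. f q + g q) p = Gam k f p + Gam k g p"
  unfolding Gam_A by (simp add: pd_add assms algebra_simps)

lemma Gam_cmult:
  assumes "\<And>p. f differentiable (at p)"
  shows "Gam k (\<lambda>q. c * f q) p = c * Gam k f p"
  unfolding Gam_A by (simp add: pd_cmult assms algebra_simps)

lemma Gam_zero: "Gam k (\<lambda>q. 0) p = 0"
  unfolding Gam_A by (simp add: pd_const)

lemma Gam_sum:
  assumes "finite A" "\<And>x p. x \<in> A \<Longrightarrow> F x differentiable (at p)"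
  shows "Gam k (\<lambda>q. \<Sum>x\<in>A. c x * F x q) p = (\<Sum>x\<in>A. c x * Gam k (F x) p)"
  using assms
proof (induction A arbitrary: p rule: finite_induct)
  case empty then show ?case by (simp add: Gam_zero)
next
  case (insert x A)
  have d1: "\<And>p. (\<lambda>q. c x * F x q) differentiable (at p)"
    using insert.prems by (intro differentiable_mult differentiable_const) auto
  have d2: "\<And>p. (\<lambda>q. \<Sum>x\<in>A. c x * F x q) differentiable (at p)"
    using insert.prems insert.hyps
    by (intro differentiable_sum) (auto intro!: differentiable_mult)
  have "Gam k (\<lambda>q. \<Sum>x\<in>insert x A. c x * F x q) p = Gam k (\<lambda>q. c x * F x q + (\<Sum>x\<in>A. c x * F x q)) p"
    using insert.hyps by simp
  also have "\<dots> = Gam k (\<lambda>q. c x * F x q) p + Gam k (\<lambda>q. \<Sum>x\<in>A. c x * F x q) p"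
    by (rule Gam_add[OF d1 d2])
  also have "\<dots> = c x * Gam k (F x) p + (\<Sum>x\<in>A. c x * Gam k (F x) p)"
    using insert by (simp add: Gam_cmult)
  finally show ?case using insert.hyps by simp
qed

lemma pd_sum:
  assumes "finite A" "\<And>x p. x \<in> A \<Longrightarrow> F x differentiable (at p)"
  shows "pd i (\<lambda>q. \<Sum>x\<in>A. c x * F x q) p = (\<Sum>x\<in>A. c x * pd i (F x) p)"
  using assms
proof (induction A arbitrary: p rule: finite_induct)
  case empty then show ?case by (simp add: pd_const)
next
  case (insert x A)
  have d1: "(\<lambda>q. c x * F x q) differentiable (at p)"
    using insert.prems by (intro differentiable_mult differentiable_const) auto
  have d2: "(\<lambda>q. \<Sum>x\<in>A. c x * F x q) differentiable (at p)"
    using insert.prems insert.hyps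
    by (intro differentiable_sum) (auto intro!: differentiable_mult)
  have "pd i (\<lambda>q. \<Sum>x\<in>insert x A. c x * F x q) p = pd i (\<lambda>q. c x * F x q + (\<Sum>x\<in>A. c x * F x q)) p"
    using insert.hyps by simp
  also have "\<dots> = pd i (\<lambda>q. c x * F x q) p + pd i (\<lambda>q. \<Sum>x\<in>A. c x * F x q) p"
    by (rule pd_add[OF d1 d2])
  also have "\<dots> = c x * pd i (F x) p + (\<Sum>x\<in>A. c x * pd i (F x) p)"
    using insert by (simp add: pd_cmult)
  finally show ?case using insert.hyps by simp
qed

definition wordof :: "(nat \<Rightarrow> nat) \<Rightarrow> nat list" where
  "wordof \<alpha> = concat (map (\<lambda>k. replicate (\<alpha> k) k) [0..<7])"

lemma foldr_GamA_gen: "foldr (\<lambda>k g. (Gam k ^^ \<alpha> k) g) ks f = foldr Gam (concat (map (\<lambda>k. replicate (\<alpha> k) k) ks)) f"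
  by (induction ks) simp_all

lemma GamA_word: "GamA \<alpha> f = foldr Gam (wordof \<alpha>) f"
  unfolding GamA_def wordof_def by (rule foldr_GamA_gen)

lemma smooth_foldr: "smooth3 f \<Longrightarrow> smooth3 (foldr Gam w f)"
  by (induction w) (simp_all add: smooth_Gam)

lemma smooth_GamA: "smooth3 f \<Longrightarrow> smooth3 (GamA \<alpha> f)"
  unfolding GamA_word by (rule smooth_foldr)

lemma concat_map_nil: "concat (map (\<lambda>k. []) xs) = []"
  by (induction xs) auto

lemma wordof_cons:
  assumes z: "\<forall>m<a. \<beta> m = 0" and a: "a < 7"
  shows "wordof (\<beta>(a := Suc (\<beta> a))) = a # wordof \<beta>"
proof -
  let ?b = "\<beta>(a := Suc (\<beta> a))"
  have split: "[0..<7] = [0..<a] @ a # [Suc a..<7]"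
  proof -
    have "[0..<a + (7 - a)] = [0..<a] @ [a..<a + (7 - a)]" by (rule upt_add_eq_append) simp
    moreover have "a + (7 - a) = 7" using a by simp
    moreover have "[a..<7] = a # [Suc a..<7]" using a by (simp add: upt_conv_Cons)
    ultimately show ?thesis by simp
  qed
  have m1: "map (\<lambda>k. replicate (?b k) k) [0..<a] = map (\<lambda>k. []) [0..<a]"
    by (rule map_cong) (auto simp: z)
  have m2: "map (\<lambda>k. replicate (\<beta> k) k) [0..<a] = map (\<lambda>k. []) [0..<a]"
    by (rule map_cong) (auto simp: z)
  have m3: "map (\<lambda>k. replicate (?b k) k) [Suc a..<7] = map (\<lambda>k. replicate (\<beta> k) k) [Suc a..<7]"
    by (rule map_cong) auto
  show ?thesis
    unfolding wordof_def split map_append list.map concat_append concat.simps m1 m2 m3 concat_map_nil by simp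
qed

lemma GamA_cons:
  assumes "\<forall>m<a. \<beta> m = 0" "a < 7"
  shows "Gam a (GamA \<beta> f) = GamA (\<beta>(a := Suc (\<beta> a))) f"
  unfolding GamA_word wordof_cons[OF assms] by simp

definition sz :: "(nat \<Rightarrow> nat) \<Rightarrow> nat" where "sz \<beta> = (\<Sum>k<7. \<beta> k)"

lemma multi_iff: "\<beta> \<in> multi s \<longleftrightarrow> (\<forall>k\<ge>7. \<beta> k = 0) \<and> sz \<beta> \<le> s"
  unfolding multi_def sz_def by simp

lemma multiD1: "\<beta> \<in> multi s \<Longrightarrow> (\<Sum>k<7. \<beta> k) \<le> s"
  unfolding multi_def mem_Collect_eq by (erule conjE)

lemma multiD2: "\<beta> \<in> multi s \<Longrightarrow> 7 \<le> k \<Longrightarrow> \<beta> k = 0"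
  unfolding multi_def mem_Collect_eq by blast

lemma multiI: "(\<And>k. 7 \<le> k \<Longrightarrow> \<beta> k = 0) \<Longrightarrow> (\<Sum>k<7. \<beta> k) \<le> s \<Longrightarrow> \<beta> \<in> multi s"
  unfolding multi_def mem_Collect_eq by blast

lemma multi_le: "\<beta> \<in> multi s \<Longrightarrow> \<beta> x \<le> s"
proof (cases "x < 7")
  case True
  assume b: "\<beta> \<in> multi s"
  have "\<beta> x \<le> (\<Sum>k<7. \<beta> k)" by (rule member_le_sum) (use True in auto)
  also have "\<dots> \<le> s" by (rule multiD1[OF b])
  finally show ?thesis .
next
  case False
  assume b: "\<beta> \<in> multi s"
  then show ?thesis using multiD2[OF b, of x] False by simp
qed

lemma finite_multi: "finite (multi s)"
proof -
  let ?S = "{f. \<forall>x. (x \<in> {..<7::nat} \<longrightarrow> f x \<in> {..s}) \<and> (x \<notin> {..<7} \<longrightarrow> f x = (0::nat))}"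
  have "multi s \<subseteq> ?S"
  proof
    fix \<beta> assume b: "\<beta> \<in> multi s"
    show "\<beta> \<in> ?S"
    proof (rule CollectI, intro allI conjI impI)
      fix x show "\<beta> x \<in> {..s}" using multi_le[OF b] by simp
    next
      fix x assume "x \<notin> {..<7::nat}"
      then show "\<beta> x = 0" using multiD2[OF b, of x] by simp
    qed
  qed
  moreover have "finite ?S"
    by (rule finite_set_of_finite_funs) auto
  ultimately show ?thesis by (rule finite_subset)
qed

lemma multi_mono: "s \<le> t \<Longrightarrow> multi s \<subseteq> multi t"
  using multiD1 multiD2 multiI by (meson order_trans subsetI)

lemma zero_multi: "(\<lambda>_. 0) \<in> multi s"
  by (rule multiI) simp_all

lemma multi0: "\<beta> \<in> multi 0 \<Longrightarrow> \<beta> = (\<lambda>_. 0)"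
  using multi_le[of \<beta> 0] by auto


lemma sz_upd: "a < 7 \<Longrightarrow> sz (\<beta>(a := Suc (\<beta> a))) = Suc (sz \<beta>)"
proof -
  assume a: "a < 7"
  have h1: "(\<Sum>k<(7::nat). (if k = a then 1 else 0::nat)) = 1" using a by simp
  have "sz (\<beta>(a := Suc (\<beta> a))) = (\<Sum>k<7. (if k = a then 1 else 0) + \<beta> k)"
    unfolding sz_def by (rule sum.cong) auto
  also have "\<dots> = (\<Sum>k<7. (if k = a then 1 else 0)) + sz \<beta>" by (simp add: sum.distrib sz_def)
  also have "\<dots> = Suc (sz \<beta>)" using h1 by simp
  finally show ?thesis .
qed

lemma multi_upd: assumes b: "\<beta> \<in> multi n" and a: "a < 7" shows "\<beta>(a := Suc (\<beta> a)) \<in> multi (Suc n)"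
proof (rule multiI)
  fix k :: nat assume "7 \<le> k"
  then show "(\<beta>(a := Suc (\<beta> a))) k = 0" using a multiD2[OF b] by simp
next
  have "(\<Sum>k<7. (\<beta>(a := Suc (\<beta> a))) k) = Suc (sz \<beta>)" using sz_upd[OF a] unfolding sz_def .
  then show "(\<Sum>k<7. (\<beta>(a := Suc (\<beta> a))) k) \<le> Suc n" using multiD1[OF b] unfolding sz_def by simp
qed

lemma peel:
  assumes b: "\<beta> \<in> multi (Suc n)" and nz: "\<beta> \<noteq> (\<lambda>_. 0)"
  shows "\<exists>k \<beta>'. k < 7 \<and> (\<forall>m<k. \<beta>' m = 0) \<and> \<beta>' \<in> multi n \<and> \<beta> = \<beta>'(k := Suc (\<beta>' k))"
proof -
  obtain m where m: "\<beta> m \<noteq> 0" using nz by auto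
  define k where "k = (LEAST m. \<beta> m \<noteq> 0)"
  have bk: "\<beta> k \<noteq> 0" unfolding k_def using m by (rule LeastI)
  have below: "\<forall>m<k. \<beta> m = 0" unfolding k_def using not_less_Least by blast
  have k7: "k < 7"
  proof (rule ccontr)
    assume "\<not> k < 7" then have "\<beta> k = 0" using multiD2[OF b, of k] by simp
    then show False using bk by simp
  qed
  define \<beta>' where "\<beta>' = \<beta>(k := \<beta> k - 1)"
  have eq: "\<beta> = \<beta>'(k := Suc (\<beta>' k))" unfolding \<beta>'_def using bk by (auto simp: fun_eq_iff)
  have sz: "sz \<beta> = Suc (sz \<beta>')" using eq sz_upd[OF k7, of \<beta>'] by simp
  have "\<beta>' \<in> multi n"
  proof (rule multiI)
    fix j :: nat assume "7 \<le> j"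
    then show "\<beta>' j = 0" using k7 multiD2[OF b] unfolding \<beta>'_def by simp
  next
    show "(\<Sum>k<7. \<beta>' k) \<le> n" using sz multiD1[OF b] unfolding sz_def by simp
  qed
  moreover have "\<forall>m<k. \<beta>' m = 0" using below unfolding \<beta>'_def by simp
  ultimately show ?thesis using k7 eq by blast
qed

lemma GamA_zero: "GamA (\<lambda>_. 0) f = f"
  unfolding GamA_word wordof_def by (simp add: concat_map_nil)

lemma GamA_peel: "k < 7 \<Longrightarrow> \<forall>m<k. \<beta>' m = 0 \<Longrightarrow> GamA (\<beta>'(k := Suc (\<beta>' k))) f = Gam k (GamA \<beta>' f)"
  by (simp add: GamA_cons)


definition SPG :: "'a set \<Rightarrow> ('a \<Rightarrow> pt \<Rightarrow> real) \<Rightarrow> (pt \<Rightarrow> real) \<Rightarrow> real \<Rightarrow> bool" where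
  "SPG A b g K \<longleftrightarrow> (\<exists>c. (\<Sum>x\<in>A. \<bar>c x\<bar>) \<le> K \<and> g = (\<lambda>p. \<Sum>x\<in>A. c x * b x p))"

lemma SPG_nonneg: "SPG A b g K \<Longrightarrow> 0 \<le> K"
  unfolding SPG_def by (meson order_trans sum_nonneg abs_ge_zero)

lemma SPG_mono: assumes "SPG A b g K" "K \<le> K'" shows "SPG A b g K'"
proof -
  obtain c where c: "(\<Sum>x\<in>A. \<bar>c x\<bar>) \<le> K" "g = (\<lambda>p. \<Sum>x\<in>A. c x * b x p)"
    using assms(1) unfolding SPG_def by blast
  show ?thesis unfolding SPG_def
    by (rule exI[of _ c], rule conjI[OF order_trans[OF c(1) assms(2)] c(2)])
qed

lemma SPG_ext: "SPG A b g K \<Longrightarrow> (\<And>p. g' p = g p) \<Longrightarrow> SPG A b g' K"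
proof -
  assume "SPG A b g K" "\<And>p. g' p = g p"
  moreover then have "g' = g" by (intro ext)
  ultimately show ?thesis by simp
qed

lemma SPG_direct: "(\<And>p. g p = (\<Sum>x\<in>A. w x * b x p)) \<Longrightarrow> SPG A b g (\<Sum>x\<in>A. \<bar>w x\<bar>)"
  unfolding SPG_def by (intro exI[of _ w]) (simp add: ext)

lemma SPG_basis:
  assumes "finite A" "x \<in> A" shows "SPG A b (b x) 1"
  unfolding SPG_def
proof (intro exI[of _ "\<lambda>y. if y = x then 1 else 0"] conjI ext)
  have "(\<Sum>y\<in>A. \<bar>if y = x then 1 else 0::real\<bar>) = (\<Sum>y\<in>A. if y = x then 1 else 0)"
    by (rule sum.cong) auto
  also have "\<dots> = 1" using assms by simp
  finally show "(\<Sum>y\<in>A. \<bar>if y = x then 1 else 0::real\<bar>) \<le> 1" by simp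
next
  fix p
  have "(\<Sum>y\<in>A. (if y = x then 1 else 0) * b y p) = (\<Sum>y\<in>A. if y = x then b y p else 0)"
    by (rule sum.cong) auto
  also have "\<dots> = b x p" using assms by simp
  finally show "b x p = (\<Sum>y\<in>A. (if y = x then 1 else 0) * b y p)" by simp
qed

lemma SPG_add:
  assumes "SPG A b g1 K1" "SPG A b g2 K2"
  shows "SPG A b (\<lambda>p. g1 p + g2 p) (K1 + K2)"
proof -
  obtain c1 where c1: "(\<Sum>x\<in>A. \<bar>c1 x\<bar>) \<le> K1" "g1 = (\<lambda>p. \<Sum>x\<in>A. c1 x * b x p)"
    using assms(1) unfolding SPG_def by blast
  obtain c2 where c2: "(\<Sum>x\<in>A. \<bar>c2 x\<bar>) \<le> K2" "g2 = (\<lambda>p. \<Sum>x\<in>A. c2 x * b x p)"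
    using assms(2) unfolding SPG_def by blast
  have "(\<Sum>x\<in>A. \<bar>c1 x + c2 x\<bar>) \<le> (\<Sum>x\<in>A. \<bar>c1 x\<bar> + \<bar>c2 x\<bar>)"
    by (rule sum_mono) (rule abs_triangle_ineq)
  also have "\<dots> = (\<Sum>x\<in>A. \<bar>c1 x\<bar>) + (\<Sum>x\<in>A. \<bar>c2 x\<bar>)" by (rule sum.distrib)
  finally have B: "(\<Sum>x\<in>A. \<bar>c1 x + c2 x\<bar>) \<le> K1 + K2" using c1(1) c2(1) by linarith
  have E: "(\<lambda>p. g1 p + g2 p) = (\<lambda>p. \<Sum>x\<in>A. (c1 x + c2 x) * b x p)"
    unfolding c1(2) c2(2) by (simp add: sum.distrib distrib_right)
  show ?thesis unfolding SPG_def by (rule exI[of _ "\<lambda>x. c1 x + c2 x"], rule conjI[OF B E])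
qed

lemma SPG_scale:
  assumes "SPG A b g K"
  shows "SPG A b (\<lambda>p. s * g p) (\<bar>s\<bar> * K)"
proof -
  obtain c where c: "(\<Sum>x\<in>A. \<bar>c x\<bar>) \<le> K" "g = (\<lambda>p. \<Sum>x\<in>A. c x * b x p)"
    using assms unfolding SPG_def by blast
  have "(\<Sum>x\<in>A. \<bar>s * c x\<bar>) = \<bar>s\<bar> * (\<Sum>x\<in>A. \<bar>c x\<bar>)" by (simp add: abs_mult sum_distrib_left)
  also have "\<dots> \<le> \<bar>s\<bar> * K" using c(1) by (simp add: mult_left_mono)
  finally have B: "(\<Sum>x\<in>A. \<bar>s * c x\<bar>) \<le> \<bar>s\<bar> * K" .
  have E: "(\<lambda>p. s * g p) = (\<lambda>p. \<Sum>x\<in>A. (s * c x) * b x p)"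
    unfolding c(2) by (simp add: sum_distrib_left mult.assoc)
  show ?thesis unfolding SPG_def by (rule exI[of _ "\<lambda>x. s * c x"], rule conjI[OF B E])
qed

lemma SPG_trans:
  assumes fA: "finite A" and fA': "finite A'" and g: "SPG A b g K"
    and bx: "\<forall>x\<in>A. SPG A' b' (b x) K2" and K2: "0 \<le> K2"
  shows "SPG A' b' g (K * K2)"
proof -
  obtain c where c: "(\<Sum>x\<in>A. \<bar>c x\<bar>) \<le> K" "g = (\<lambda>p. \<Sum>x\<in>A. c x * b x p)"
    using g unfolding SPG_def by blast
  have "\<forall>x\<in>A. \<exists>d. (\<Sum>y\<in>A'. \<bar>d y\<bar>) \<le> K2 \<and> b x = (\<lambda>p. \<Sum>y\<in>A'. d y * b' y p)"
    using bx unfolding SPG_def by blast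
  then obtain D where D: "\<forall>x\<in>A. (\<Sum>y\<in>A'. \<bar>D x y\<bar>) \<le> K2 \<and> b x = (\<lambda>p. \<Sum>y\<in>A'. D x y * b' y p)"
    by (rule bchoice[THEN exE]) blast
  define c' where "c' y = (\<Sum>x\<in>A. c x * D x y)" for y
  have E: "g p = (\<Sum>y\<in>A'. c' y * b' y p)" for p
  proof -
    have "g p = (\<Sum>x\<in>A. c x * b x p)" using c(2) by simp
    also have "\<dots> = (\<Sum>x\<in>A. c x * (\<Sum>y\<in>A'. D x y * b' y p))"
      by (rule sum.cong[OF refl]) (use D in simp)
    also have "\<dots> = (\<Sum>x\<in>A. \<Sum>y\<in>A'. c x * D x y * b' y p)"
      by (simp add: sum_distrib_left mult.assoc)
    also have "\<dots> = (\<Sum>y\<in>A'. \<Sum>x\<in>A. c x * D x y * b' y p)" by (rule sum.swap)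
    also have "\<dots> = (\<Sum>y\<in>A'. c' y * b' y p)"
      unfolding c'_def by (simp add: sum_distrib_right)
    finally show ?thesis .
  qed
  have "(\<Sum>y\<in>A'. \<bar>c' y\<bar>) \<le> (\<Sum>y\<in>A'. \<Sum>x\<in>A. \<bar>c x\<bar> * \<bar>D x y\<bar>)"
    unfolding c'_def by (rule sum_mono) (metis (no_types, lifting) abs_mult sum_abs sum.cong)
  also have "\<dots> = (\<Sum>x\<in>A. \<bar>c x\<bar> * (\<Sum>y\<in>A'. \<bar>D x y\<bar>))"
    by (subst sum.swap) (simp add: sum_distrib_left)
  also have "\<dots> \<le> (\<Sum>x\<in>A. \<bar>c x\<bar> * K2)"
    using D by (intro sum_mono mult_left_mono) auto
  also have "\<dots> = (\<Sum>x\<in>A. \<bar>c x\<bar>) * K2" by (simp add: sum_distrib_right)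
  also have "\<dots> \<le> K * K2" using c(1) K2 by (rule mult_right_mono)
  finally have B: "(\<Sum>y\<in>A'. \<bar>c' y\<bar>) \<le> K * K2" .
  have "g = (\<lambda>p. \<Sum>y\<in>A'. c' y * b' y p)" using E by (intro ext)
  then show ?thesis unfolding SPG_def using B by blast
qed

lemma SPG_subset:
  assumes "finite A'" "A \<subseteq> A'" "SPG A b g K" shows "SPG A' b g K"
proof -
  have fA: "finite A" using assms(1,2) by (rule finite_subset[rotated])
  have "\<forall>x\<in>A. SPG A' b (b x) 1"
  proof
    fix x assume "x \<in> A" then have "x \<in> A'" using assms(2) by blast
    then show "SPG A' b (b x) 1" by (rule SPG_basis[OF assms(1)])
  qed
  then have "SPG A' b g (K * 1)"
    by (intro SPG_trans[OF fA assms(1) assms(3)]) simp_all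
  then show ?thesis by simp
qed

lemma SPG_op:
  assumes g: "SPG A b g K"
    and T: "\<And>c p. T (\<lambda>q. \<Sum>x\<in>A. c x * b x q) p = (\<Sum>x\<in>A. c x * T (b x) p)"
  shows "SPG A (\<lambda>x. T (b x)) (T g) K"
proof -
  obtain c where c: "(\<Sum>x\<in>A. \<bar>c x\<bar>) \<le> K" "g = (\<lambda>p. \<Sum>x\<in>A. c x * b x p)"
    using g unfolding SPG_def by blast
  have "T g = (\<lambda>p. \<Sum>x\<in>A. c x * T (b x) p)" unfolding c(2) using T by (intro ext)
  then show ?thesis unfolding SPG_def using c(1) by blast
qed

lemma SPG_bound:
  assumes g: "SPG A b g K" and M: "\<forall>x\<in>A. \<bar>b x p\<bar> \<le> M" "0 \<le> M"
  shows "\<bar>g p\<bar> \<le> K * M"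
proof -
  obtain c where c: "(\<Sum>x\<in>A. \<bar>c x\<bar>) \<le> K" "g = (\<lambda>p. \<Sum>x\<in>A. c x * b x p)"
    using g unfolding SPG_def by blast
  have "\<bar>g p\<bar> = \<bar>\<Sum>x\<in>A. c x * b x p\<bar>" using c(2) by simp
  also have "\<dots> \<le> (\<Sum>x\<in>A. \<bar>c x * b x p\<bar>)" by (rule sum_abs)
  also have "\<dots> \<le> (\<Sum>x\<in>A. \<bar>c x\<bar> * M)"
    using M by (intro sum_mono) (simp add: abs_mult mult_left_mono)
  also have "\<dots> = (\<Sum>x\<in>A. \<bar>c x\<bar>) * M" by (simp add: sum_distrib_right)
  also have "\<dots> \<le> K * M" using c(1) M(2) by (rule mult_right_mono)
  finally show ?thesis .
qed


definition BB :: "nat \<Rightarrow> (nat \<Rightarrow> nat) set" where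
  "BB n = {\<beta> \<in> multi n. \<beta> \<noteq> (\<lambda>_. 0)}"

definition GB :: "(pt \<Rightarrow> real) \<Rightarrow> (nat \<Rightarrow> nat) \<Rightarrow> pt \<Rightarrow> real" where
  "GB \<psi> \<beta> = GamA \<beta> \<psi>"

lemma finite_BB: "finite (BB n)"
  unfolding BB_def using finite_multi by simp

lemma BB_mono: "n \<le> m \<Longrightarrow> BB n \<subseteq> BB m"
  unfolding BB_def using multi_mono by blast

lemma BB_multi: "\<beta> \<in> BB n \<Longrightarrow> \<beta> \<in> multi n"
  unfolding BB_def by simp

lemma Gam_comb:
  assumes \<psi>: "smooth3 \<psi>" and g: "SPG (BB n) (GB \<psi>) g K"
  shows "SPG (BB n) (\<lambda>\<beta>. Gam a (GamA \<beta> \<psi>)) (Gam a g) K"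
proof -
  have "SPG (BB n) (\<lambda>\<beta>. Gam a (GB \<psi> \<beta>)) (Gam a g) K"
  proof (rule SPG_op[OF g])
    fix c p
    show "Gam a (\<lambda>q. \<Sum>x\<in>BB n. c x * GB \<psi> x q) p = (\<Sum>x\<in>BB n. c x * Gam a (GB \<psi> x) p)"
      by (rule Gam_sum[OF finite_BB]) (simp add: GB_def smooth_diff smooth_GamA \<psi>)
  qed
  then show ?thesis unfolding GB_def .
qed

definition PP :: "nat \<Rightarrow> nat \<Rightarrow> real \<Rightarrow> bool" where
  "PP n a K \<longleftrightarrow> (\<forall>\<psi>. smooth3 \<psi> \<longrightarrow> (\<forall>\<beta>\<in>multi n. SPG (BB (Suc n)) (GB \<psi>) (Gam a (GamA \<beta> \<psi>)) K))"

lemma PP_mono: "PP n a K \<Longrightarrow> K \<le> K' \<Longrightarrow> PP n a K'"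
  unfolding PP_def using SPG_mono by blast

lemma pbw_step:
  assumes K0: "0 \<le> K0" and inner: "\<forall>k<a. PP n k K0" and a: "a < 7"
    and outer: "\<And>n'. n = Suc n' \<Longrightarrow> (\<forall>c<7. PP n' c K1)" and K1: "0 \<le> K1"
  shows "PP n a (1 + K1 * K0 + K1)"
  unfolding PP_def
proof (intro allI impI ballI)
  fix \<psi> \<beta> assume \<psi>: "smooth3 \<psi>" and b: "\<beta> \<in> multi n"
  let ?K = "1 + K1 * K0 + K1"
  show "SPG (BB (Suc n)) (GB \<psi>) (Gam a (GamA \<beta> \<psi>)) ?K"
  proof (cases "\<forall>m<a. \<beta> m = 0")
    case True
    let ?b = "\<beta>(a := Suc (\<beta> a))"
    have e: "Gam a (GamA \<beta> \<psi>) = GB \<psi> ?b" unfolding GB_def by (rule GamA_cons[OF True a])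
    have "?b \<in> BB (Suc n)" unfolding BB_def using multi_upd[OF b a] by (auto simp: fun_eq_iff)
    then have "SPG (BB (Suc n)) (GB \<psi>) (Gam a (GamA \<beta> \<psi>)) 1"
      unfolding e by (rule SPG_basis[OF finite_BB])
    then show ?thesis by (rule SPG_mono) (use K0 K1 in simp)
  next
    case False
    then obtain m where m: "m < a" "\<beta> m \<noteq> 0" by blast
    have nz: "\<beta> \<noteq> (\<lambda>_. 0)" using m by auto
    have "n \<noteq> 0"
    proof
      assume "n = 0" then have "\<beta> = (\<lambda>_. 0)" using b multi0 by simp
      then show False using nz by simp
    qed
    then obtain n' where n': "n = Suc n'" by (cases n) auto
    obtain k \<beta>' where kb: "k < 7" "\<forall>m<k. \<beta>' m = 0" "\<beta>' \<in> multi n'" "\<beta> = \<beta>'(k := Suc (\<beta>' k))"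
      using peel[OF b[unfolded n'] nz] by blast
    have ka: "k < a"
    proof (rule ccontr)
      assume "\<not> k < a"
      then have "m < k" using m by simp
      then have "\<beta> m = 0" using kb(2,4) by simp
      then show False using m by simp
    qed
    let ?g = "GamA \<beta>' \<psi>"
    have g: "smooth3 ?g" by (rule smooth_GamA[OF \<psi>])
    have eb: "GamA \<beta> \<psi> = Gam k ?g" unfolding kb(4) by (rule GamA_peel[OF kb(1,2)])
    let ?c = "snd (br a k)" and ?s = "fst (br a k)"
    have comm: "Gam a (GamA \<beta> \<psi>) p = Gam k (Gam a ?g) p + ?s * Gam ?c ?g p" for p
      unfolding eb by (rule commutator[OF g a kb(1)])
    have outer': "\<forall>c<7. PP n' c K1" by (rule outer[OF n'])
    have S1: "SPG (BB n) (GB \<psi>) (Gam a ?g) K1"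
      using outer' a \<psi> kb(3) unfolding PP_def n' by blast
    have S2: "SPG (BB n) (\<lambda>\<gamma>. Gam k (GamA \<gamma> \<psi>)) (Gam k (Gam a ?g)) K1"
      by (rule Gam_comb[OF \<psi> S1])
    have S3: "\<forall>\<gamma>\<in>BB n. SPG (BB (Suc n)) (GB \<psi>) (Gam k (GamA \<gamma> \<psi>)) K0"
      using inner ka \<psi> BB_multi unfolding PP_def by blast
    have S4: "SPG (BB (Suc n)) (GB \<psi>) (Gam k (Gam a ?g)) (K1 * K0)"
      by (rule SPG_trans[OF finite_BB finite_BB S2 S3 K0])
    have "SPG (BB n) (GB \<psi>) (Gam ?c ?g) K1"
      using outer' br_snd \<psi> kb(3) unfolding PP_def n' by blast
    then have S5: "SPG (BB (Suc n)) (GB \<psi>) (Gam ?c ?g) K1"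
      by (rule SPG_subset[OF finite_BB BB_mono, rotated]) simp
    have "SPG (BB (Suc n)) (GB \<psi>) (\<lambda>p. ?s * Gam ?c ?g p) (\<bar>?s\<bar> * K1)"
      by (rule SPG_scale[OF S5])
    then have S6: "SPG (BB (Suc n)) (GB \<psi>) (\<lambda>p. ?s * Gam ?c ?g p) K1"
      by (rule SPG_mono) (use br_abs K1 in \<open>simp add: mult_left_le_one_le\<close>)
    have "SPG (BB (Suc n)) (GB \<psi>) (\<lambda>p. Gam k (Gam a ?g) p + ?s * Gam ?c ?g p) (K1 * K0 + K1)"
      by (rule SPG_add[OF S4 S6])
    then have "SPG (BB (Suc n)) (GB \<psi>) (Gam a (GamA \<beta> \<psi>)) (K1 * K0 + K1)"
      by (rule SPG_ext) (rule comm)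
    then show ?thesis by (rule SPG_mono) simp
  qed
qed

lemma pbw: "\<exists>K\<ge>0. \<forall>a<7. PP n a K"
proof (induction n)
  case 0
  have "\<forall>a\<le>7. \<exists>K\<ge>0. \<forall>k<a. PP 0 k K"
  proof (intro allI impI)
    fix a :: nat assume "a \<le> 7"
    then show "\<exists>K\<ge>0. \<forall>k<a. PP 0 k K"
    proof (induction a)
      case 0 then show ?case by (intro exI[of _ 0]) simp
    next
      case (Suc a)
      then obtain K0 where K0: "K0 \<ge> 0" "\<forall>k<a. PP 0 k K0" by auto
      have "PP 0 a (1 + 0 * K0 + 0)"
        by (rule pbw_step[OF K0(1) K0(2)]) (use Suc.prems in auto)
      then have "PP 0 a (max K0 1)" by (rule PP_mono) simp
      moreover have "\<forall>k<a. PP 0 k (max K0 1)" using K0(2) PP_mono by (meson max.cobounded1)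
      ultimately have "\<forall>k<Suc a. PP 0 k (max K0 1)" using less_Suc_eq by auto
      then show ?case by (intro exI[of _ "max K0 1"]) simp
    qed
  qed
  then show ?case by simp
next
  case (Suc n)
  then obtain K1 where K1: "K1 \<ge> 0" "\<forall>c<7. PP n c K1" by blast
  have "\<forall>a\<le>7. \<exists>K\<ge>0. \<forall>k<a. PP (Suc n) k K"
  proof (intro allI impI)
    fix a :: nat assume "a \<le> 7"
    then show "\<exists>K\<ge>0. \<forall>k<a. PP (Suc n) k K"
    proof (induction a)
      case 0 then show ?case by (intro exI[of _ 0]) simp
    next
      case (Suc a)
      then obtain K0 where K0: "K0 \<ge> 0" "\<forall>k<a. PP (Suc n) k K0" by auto
      have "PP (Suc n) a (1 + K1 * K0 + K1)"
        by (rule pbw_step[OF K0(1) K0(2) _ _ K1(1)]) (use Suc.prems K1(2) in auto)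
      then have "PP (Suc n) a (max K0 (1 + K1 * K0 + K1))" by (rule PP_mono) simp
      moreover have "\<forall>k<a. PP (Suc n) k (max K0 (1 + K1 * K0 + K1))" using K0(2) PP_mono by (meson max.cobounded1)
      ultimately have "\<forall>k<Suc a. PP (Suc n) k (max K0 (1 + K1 * K0 + K1))" using less_Suc_eq by auto
      then show ?case by (intro exI[of _ "max K0 (1 + K1 * K0 + K1)"]) (use K0 in simp)
    qed
  qed
  then show ?case by simp
qed


lemma zero_upd_BB: "j < 7 \<Longrightarrow> (\<lambda>_. 0)(j := Suc 0) \<in> BB (Suc n)"
proof -
  assume j: "j < 7"
  have "(\<lambda>_. 0)(j := Suc ((\<lambda>_. 0::nat) j)) \<in> multi (Suc n)" by (rule multi_upd[OF zero_multi j])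
  then show ?thesis unfolding BB_def by (auto simp: fun_eq_iff)
qed

lemma Gam_basis1: "j < 7 \<Longrightarrow> Gam j \<psi> = GB \<psi> ((\<lambda>_. 0)(j := Suc 0))"
  unfolding GB_def using GamA_cons[of j "\<lambda>_. 0" \<psi>] by (simp add: GamA_zero)

lemma words:
  "\<exists>K\<ge>0. \<forall>\<psi>. smooth3 \<psi> \<longrightarrow> (\<forall>j<7. \<forall>w. length w = l \<longrightarrow> set w \<subseteq> {..<7} \<longrightarrow>
      SPG (BB (Suc l)) (GB \<psi>) (foldr Gam w (Gam j \<psi>)) K)"
proof (induction l)
  case 0
  show ?case
  proof (intro exI[of _ 1] conjI allI impI)
    fix \<psi> :: "pt \<Rightarrow> real" and j :: nat and w :: "nat list"
    assume "j < 7" "length w = 0"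
    then show "SPG (BB (Suc 0)) (GB \<psi>) (foldr Gam w (Gam j \<psi>)) 1"
      using Gam_basis1[of j \<psi>] SPG_basis[OF finite_BB zero_upd_BB] by simp
  qed simp
next
  case (Suc l)
  then obtain K where K: "K \<ge> 0" "\<forall>\<psi>. smooth3 \<psi> \<longrightarrow> (\<forall>j<7. \<forall>w. length w = l \<longrightarrow> set w \<subseteq> {..<7} \<longrightarrow>
      SPG (BB (Suc l)) (GB \<psi>) (foldr Gam w (Gam j \<psi>)) K)" by blast
  obtain KL where KL: "KL \<ge> 0" "\<forall>a<7. PP (Suc l) a KL" using pbw by blast
  show ?case
  proof (intro exI[of _ "K * KL"] conjI allI impI)
    show "0 \<le> K * KL" using K KL by simp
  next
    fix \<psi> :: "pt \<Rightarrow> real" and j :: nat and w :: "nat list"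
    assume \<psi>: "smooth3 \<psi>" and j: "j < 7" and lw: "length w = Suc l" and sw: "set w \<subseteq> {..<7}"
    obtain a w' where w: "w = a # w'" using lw by (cases w) auto
    have a: "a < 7" using sw w by simp
    have w': "length w' = l" "set w' \<subseteq> {..<7}" using lw sw w by auto
    have S1: "SPG (BB (Suc l)) (GB \<psi>) (foldr Gam w' (Gam j \<psi>)) K" using K(2) \<psi> j w' by blast
    have S2: "SPG (BB (Suc l)) (\<lambda>\<gamma>. Gam a (GamA \<gamma> \<psi>)) (Gam a (foldr Gam w' (Gam j \<psi>))) K"
      by (rule Gam_comb[OF \<psi> S1])
    have S3: "\<forall>\<gamma>\<in>BB (Suc l). SPG (BB (Suc (Suc l))) (GB \<psi>) (Gam a (GamA \<gamma> \<psi>)) KL"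
      using KL(2) a \<psi> BB_multi unfolding PP_def by blast
    show "SPG (BB (Suc (Suc l))) (GB \<psi>) (foldr Gam w (Gam j \<psi>)) (K * KL)"
      unfolding w using SPG_trans[OF finite_BB finite_BB S2 S3 KL(1)] by simp
  qed
qed

definition DB :: "nat \<Rightarrow> (nat \<times> (nat \<Rightarrow> nat)) set" where
  "DB n = {..<3} \<times> multi n"

definition Db :: "(pt \<Rightarrow> real) \<Rightarrow> nat \<times> (nat \<Rightarrow> nat) \<Rightarrow> pt \<Rightarrow> real" where
  "Db \<psi> x = GamA (snd x) (pd (fst x) \<psi>)"

lemma finite_DB: "finite (DB n)"
  unfolding DB_def using finite_multi by simp

lemma DB_mono: "n \<le> m \<Longrightarrow> DB n \<subseteq> DB m"
  unfolding DB_def using multi_mono by blast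

lemma pd_lin_abs: "\<bar>a\<bar> \<le> 1 \<Longrightarrow> \<bar>b\<bar> \<le> 1 \<Longrightarrow> \<bar>c\<bar> \<le> 1 \<Longrightarrow> \<bar>pd i (lin a b c d) p\<bar> \<le> 1"
  unfolding pd_lin by simp

lemma dA_abs: "\<bar>pd i (Acoef k m) p\<bar> \<le> 1"
proof -
  consider "k = 0" | "k = 1" | "k = 2" | "k = 3" | "k = 4" | "k = 5" | "k \<ge> 6" by arith
  then show ?thesis
  proof cases
    case 1 then show ?thesis unfolding Acoef_def by (cases "m = 0"; cases "m = 1"; simp add: pd_lin_abs)
  next
    case 2 then show ?thesis unfolding Acoef_def by (cases "m = 0"; cases "m = 1"; simp add: pd_lin_abs)
  next
    case 3 then show ?thesis unfolding Acoef_def by (cases "m = 0"; cases "m = 1"; simp add: pd_lin_abs)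
  next
    case 4 then show ?thesis unfolding Acoef_def by (cases "m = 0"; cases "m = 1"; simp add: pd_lin_abs)
  next
    case 5 then show ?thesis unfolding Acoef_def by (cases "m = 0"; cases "m = 1"; simp add: pd_lin_abs)
  next
    case 6 then show ?thesis unfolding Acoef_def by (cases "m = 1"; simp add: pd_lin_abs)
  next
    case 7 then show ?thesis unfolding Acoef_def by (cases "m = 2"; simp add: pd_lin_abs)
  qed
qed

lemma dA_const: "pd i (Acoef k m) p = pd i (Acoef k m) 0"
proof -
  obtain a b c d where "Acoef k m = lin a b c d" using Acoef_lin by blast
  then show ?thesis by (simp add: pd_lin)
qed

lemma pd_Gam_comm:
  assumes g: "smooth3 g"
  shows "pd i (Gam k g) p = Gam k (pd i g) p +
     (pd i (Acoef k 0) 0 * pd 0 g p + pd i (Acoef k 1) 0 * pd 1 g p + pd i (Acoef k 2) 0 * pd 2 g p)"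
proof -
  have c0: "pd i (pd 0 g) p = pd 0 (pd i g) p" by (rule clairaut[OF g])
  have c1: "pd i (pd 1 g) p = pd 1 (pd i g) p" by (rule clairaut[OF g])
  have c2: "pd i (pd 2 g) p = pd 2 (pd i g) p" by (rule clairaut[OF g])
  show ?thesis
    unfolding pd_Gam[OF g] Gam_A[of k "pd i g"] c0 c1 c2
    by (simp add: dA_const[of i k _ p] algebra_simps)
qed

definition DD :: "nat \<Rightarrow> real \<Rightarrow> bool" where
  "DD n K \<longleftrightarrow> (\<forall>\<psi>. smooth3 \<psi> \<longrightarrow> (\<forall>i<3. \<forall>\<beta>\<in>multi n. SPG (DB n) (Db \<psi>) (pd i (GamA \<beta> \<psi>)) K))"

lemma DD_base: "i < 3 \<Longrightarrow> SPG (DB n) (Db \<psi>) (pd i (GamA (\<lambda>_. 0) \<psi>)) 1"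
proof -
  assume i: "i < 3"
  have "(i, (\<lambda>_. 0)) \<in> DB n" unfolding DB_def using i zero_multi by simp
  then have "SPG (DB n) (Db \<psi>) (Db \<psi> (i, (\<lambda>_. 0))) 1" by (rule SPG_basis[OF finite_DB])
  then show ?thesis unfolding Db_def by (simp add: GamA_zero)
qed

lemma convert_basis:
  assumes "SPG (BB n) (GB (pd m \<psi>)) g K" "m < 3"
  shows "SPG (DB n) (Db \<psi>) g K"
proof -
  have "\<forall>\<delta>\<in>BB n. SPG (DB n) (Db \<psi>) (GB (pd m \<psi>) \<delta>) 1"
  proof
    fix \<delta> assume d: "\<delta> \<in> BB n"
    have "(m, \<delta>) \<in> DB n" unfolding DB_def using d assms(2) BB_multi by simp
    then have "SPG (DB n) (Db \<psi>) (Db \<psi> (m, \<delta>)) 1" by (rule SPG_basis[OF finite_DB])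
    then show "SPG (DB n) (Db \<psi>) (GB (pd m \<psi>) \<delta>) 1" unfolding Db_def GB_def by simp
  qed
  from SPG_trans[OF finite_BB finite_DB assms(1) this] show ?thesis by simp
qed

lemma dlemma: "\<exists>K\<ge>0. DD n K"
proof (induction n)
  case 0
  show ?case unfolding DD_def
    by (intro exI[of _ 1]) (auto dest!: multi0 intro: DD_base)
next
  case (Suc n)
  then obtain KD where KD: "KD \<ge> 0" "DD n KD" by blast
  obtain KL where KL: "KL \<ge> 0" "\<forall>a<7. PP n a KL" using pbw by blast
  let ?K = "1 + KD * KL + 3 * KD"
  have "DD (Suc n) ?K" unfolding DD_def
  proof (intro allI impI ballI)
    fix \<psi> and i :: nat and \<beta> assume \<psi>: "smooth3 \<psi>" and i: "i < 3" and b: "\<beta> \<in> multi (Suc n)"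
    show "SPG (DB (Suc n)) (Db \<psi>) (pd i (GamA \<beta> \<psi>)) ?K"
    proof (cases "\<beta> = (\<lambda>_. 0)")
      case True
      have "0 \<le> KD * KL" using KD(1) KL(1) by simp
      then have nn: "1 \<le> ?K" using KD(1) by linarith
      show ?thesis using True SPG_mono[OF DD_base[OF i, of "Suc n" \<psi>] nn] by simp
    next
      case False
      obtain k \<beta>' where kb: "k < 7" "\<forall>m<k. \<beta>' m = 0" "\<beta>' \<in> multi n" "\<beta> = \<beta>'(k := Suc (\<beta>' k))"
        using peel[OF b False] by blast
      let ?g = "GamA \<beta>' \<psi>"
      have g: "smooth3 ?g" by (rule smooth_GamA[OF \<psi>])
      have eb: "GamA \<beta> \<psi> = Gam k ?g" unfolding kb(4) by (rule GamA_peel[OF kb(1,2)])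
      have T1: "SPG (DB n) (Db \<psi>) (pd i ?g) KD" using KD(2) \<psi> i kb(3) unfolding DD_def by blast
      have T2: "SPG (DB n) (\<lambda>x. Gam k (Db \<psi> x)) (Gam k (pd i ?g)) KD"
      proof (rule SPG_op[OF T1])
        fix c p
        show "Gam k (\<lambda>q. \<Sum>x\<in>DB n. c x * Db \<psi> x q) p = (\<Sum>x\<in>DB n. c x * Gam k (Db \<psi> x) p)"
          by (rule Gam_sum[OF finite_DB]) (simp add: Db_def smooth_diff smooth_GamA smooth_pd \<psi>)
      qed
      have T3: "\<forall>x\<in>DB n. SPG (DB (Suc n)) (Db \<psi>) (Gam k (Db \<psi> x)) KL"
      proof
        fix x assume x: "x \<in> DB n"
        have m: "fst x < 3" "snd x \<in> multi n" using x unfolding DB_def by auto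
        have sm: "smooth3 (pd (fst x) \<psi>)" by (rule smooth_pd[OF \<psi>])
        have "SPG (BB (Suc n)) (GB (pd (fst x) \<psi>)) (Gam k (GamA (snd x) (pd (fst x) \<psi>))) KL"
          using KL(2) kb(1) sm m(2) unfolding PP_def by blast
        then have "SPG (DB (Suc n)) (Db \<psi>) (Gam k (GamA (snd x) (pd (fst x) \<psi>))) KL"
          by (rule convert_basis[OF _ m(1)])
        moreover have "Db \<psi> x = GamA (snd x) (pd (fst x) \<psi>)" by (simp add: Db_def)
        ultimately show "SPG (DB (Suc n)) (Db \<psi>) (Gam k (Db \<psi> x)) KL" by simp
      qed
      have T4: "SPG (DB (Suc n)) (Db \<psi>) (Gam k (pd i ?g)) (KD * KL)"
        by (rule SPG_trans[OF finite_DB finite_DB T2 T3 KL(1)])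
      have Pm: "SPG (DB (Suc n)) (Db \<psi>) (\<lambda>p. pd i (Acoef k m) 0 * pd m ?g p) KD" if m: "m < 3" for m
      proof -
        have "SPG (DB n) (Db \<psi>) (pd m ?g) KD" using KD(2) \<psi> m kb(3) unfolding DD_def by blast
        then have "SPG (DB (Suc n)) (Db \<psi>) (pd m ?g) KD"
          by (rule SPG_subset[OF finite_DB DB_mono, rotated]) simp
        then have "SPG (DB (Suc n)) (Db \<psi>) (\<lambda>p. pd i (Acoef k m) 0 * pd m ?g p) (\<bar>pd i (Acoef k m) 0\<bar> * KD)"
          by (rule SPG_scale)
        then show ?thesis
          by (rule SPG_mono) (use dA_abs[of i k m 0] KD(1) in \<open>simp add: mult_left_le_one_le\<close>)
      qed
      have "SPG (DB (Suc n)) (Db \<psi>) (\<lambda>p. Gam k (pd i ?g) p +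
           (pd i (Acoef k 0) 0 * pd 0 ?g p + pd i (Acoef k 1) 0 * pd 1 ?g p + pd i (Acoef k 2) 0 * pd 2 ?g p))
           (KD * KL + (KD + KD + KD))"
        by (intro SPG_add T4 Pm) simp_all
      then have "SPG (DB (Suc n)) (Db \<psi>) (pd i (GamA \<beta> \<psi>)) (KD * KL + (KD + KD + KD))"
        by (rule SPG_ext) (simp add: eb pd_Gam_comm[OF g])
      then show ?thesis by (rule SPG_mono) simp
    qed
  qed
  then show ?case using KD KL by (intro exI[of _ ?K]) simp
qed


lemma abs_le_r: "r * r = x1 * x1 + x2 * x2 \<Longrightarrow> 0 \<le> r \<Longrightarrow> \<bar>x1\<bar> \<le> (r::real)"
proof -
  assume a: "r * r = x1 * x1 + x2 * x2" and r: "0 \<le> r"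
  have "x1 * x1 \<le> r * r" using a zero_le_square[of x2] by linarith
  then have "\<bar>x1\<bar>\<^sup>2 \<le> r\<^sup>2" by (simp add: power2_eq_square)
  then show ?thesis using r by (rule power2_le_imp_le)
qed

lemma base_bound:
  fixes t ya yb r J da db dc :: real
  assumes r: "r > 0" and rr: "r * r = ya * ya + yb * yb" and J: "\<bar>t - r\<bar> \<le> J" "1 \<le> J"
  defines "Z1 \<equiv> ya / r * da + db" and "Z2 \<equiv> yb / r * da + dc"
  defines "R \<equiv> r * (\<bar>Z1\<bar> + \<bar>Z2\<bar>) + J * (\<bar>da\<bar> + \<bar>db\<bar> + \<bar>dc\<bar>)"
  shows "\<bar>t * da + ya * db + yb * dc\<bar> \<le> R"
    and "\<bar>t * db + ya * da\<bar> \<le> R"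
    and "\<bar>t * dc + yb * da\<bar> \<le> R"
    and "\<bar>ya * dc - yb * db\<bar> \<le> R"
    and "\<bar>da\<bar> \<le> R" and "\<bar>db\<bar> \<le> R" and "\<bar>dc\<bar> \<le> R"
proof -
  have ax1: "\<bar>ya\<bar> \<le> r" using abs_le_r[OF rr] r by simp
  have ax2: "\<bar>yb\<bar> \<le> r" using abs_le_r[of r yb ya] rr r by (simp add: add.commute)
  have J0: "0 \<le> J" using J by simp
  have Z1n: "0 \<le> r * \<bar>Z1\<bar>" and Z2n: "0 \<le> r * \<bar>Z2\<bar>" using r by simp_all
  have dn: "0 \<le> J * \<bar>da\<bar>" "0 \<le> J * \<bar>db\<bar>" "0 \<le> J * \<bar>dc\<bar>" using J0 by simp_all
  have Rdef: "R = r * \<bar>Z1\<bar> + r * \<bar>Z2\<bar> + J * \<bar>da\<bar> + J * \<bar>db\<bar> + J * \<bar>dc\<bar>"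
    unfolding R_def by (simp add: algebra_simps)
  have td: "\<bar>(t - r) * d\<bar> \<le> J * \<bar>d\<bar>" for d
    using J(1) by (simp add: abs_mult mult_right_mono)
  have dd: "\<bar>d\<bar> \<le> J * \<bar>d\<bar>" for d
    using mult_right_mono[OF J(2) abs_ge_zero[of d]] by simp
  have xz1: "\<bar>ya * Z1\<bar> \<le> r * \<bar>Z1\<bar>" using ax1 by (simp add: abs_mult mult_right_mono)
  have xz2: "\<bar>yb * Z2\<bar> \<le> r * \<bar>Z2\<bar>" using ax2 by (simp add: abs_mult mult_right_mono)
  have xz2': "\<bar>yb * Z1\<bar> \<le> r * \<bar>Z1\<bar>" using ax2 by (simp add: abs_mult mult_right_mono)
  have xz1': "\<bar>ya * Z2\<bar> \<le> r * \<bar>Z2\<bar>" using ax1 by (simp add: abs_mult mult_right_mono)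
  have e0: "t * da + ya * db + yb * dc = (t - r) * da + ya * Z1 + yb * Z2"
  proof -
    have "ya * Z1 + yb * Z2 = (ya * ya + yb * yb) / r * da + ya * db + yb * dc"
      unfolding Z1_def Z2_def using r by (simp add: field_simps)
    also have "\<dots> = r * da + ya * db + yb * dc" unfolding rr[symmetric] using r by simp
    finally show ?thesis by (simp add: algebra_simps)
  qed
  show "\<bar>t * da + ya * db + yb * dc\<bar> \<le> R"
    unfolding e0 Rdef
    using abs_triangle_ineq[of "(t - r) * da + ya * Z1" "yb * Z2"] abs_triangle_ineq[of "(t - r) * da" "ya * Z1"]
      td[of da] xz1 xz2 dn by linarith
  have e1: "t * db + ya * da = (t - r) * db + r * Z1"
    unfolding Z1_def using r by (simp add: field_simps)
  have rz1: "\<bar>r * Z1\<bar> = r * \<bar>Z1\<bar>" and rz2: "\<bar>r * Z2\<bar> = r * \<bar>Z2\<bar>" using r by (simp_all add: abs_mult)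
  show "\<bar>t * db + ya * da\<bar> \<le> R"
    unfolding e1 Rdef
    using abs_triangle_ineq[of "(t - r) * db" "r * Z1"] td[of db] rz1 Z2n dn by linarith
  have e2: "t * dc + yb * da = (t - r) * dc + r * Z2"
    unfolding Z2_def using r by (simp add: field_simps)
  show "\<bar>t * dc + yb * da\<bar> \<le> R"
    unfolding e2 Rdef
    using abs_triangle_ineq[of "(t - r) * dc" "r * Z2"] td[of dc] rz2 Z1n dn by linarith
  have e3: "ya * dc - yb * db = ya * Z2 - yb * Z1"
    unfolding Z1_def Z2_def using r by (simp add: field_simps)
  show "\<bar>ya * dc - yb * db\<bar> \<le> R"
    unfolding e3 Rdef
    using abs_triangle_ineq4[of "ya * Z2" "yb * Z1"] xz1' xz2' dn by linarith
  show "\<bar>da\<bar> \<le> R" unfolding Rdef using dd[of da] Z1n Z2n dn by linarith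
  show "\<bar>db\<bar> \<le> R" unfolding Rdef using dd[of db] Z1n Z2n dn by linarith
  show "\<bar>dc\<bar> \<le> R" unfolding Rdef using dd[of dc] Z1n Z2n dn by linarith
qed

lemma jbr_ge: "\<bar>y\<bar> \<le> jbr y" "1 \<le> jbr y"
proof -
  have "sqrt (y\<^sup>2) \<le> sqrt (1 + y\<^sup>2)" by (rule real_sqrt_le_mono) simp
  then show "\<bar>y\<bar> \<le> jbr y" unfolding jbr_def by simp
  have "sqrt 1 \<le> sqrt (1 + y\<^sup>2)" by (rule real_sqrt_le_mono) simp
  then show "1 \<le> jbr y" unfolding jbr_def by simp
qed

lemma Gam_Zbound:
  assumes r: "xnorm p > 0" and k: "k < 7"
  shows "\<bar>Gam k g p\<bar> \<le> xnorm p * (\<bar>Zf 1 g p\<bar> + \<bar>Zf 2 g p\<bar>)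
            + jbr (tco p - xnorm p) * (\<bar>pd 0 g p\<bar> + \<bar>pd 1 g p\<bar> + \<bar>pd 2 g p\<bar>)"
proof -
  have rr: "xnorm p * xnorm p = x1co p * x1co p + x2co p * x2co p"
    unfolding xnorm_def by (simp add: power2_eq_square[symmetric])
  note B = base_bound[where t = "tco p" and da = "pd 0 g p" and db = "pd 1 g p" and dc = "pd 2 g p"
     and r = "xnorm p" and ya = "x1co p" and yb = "x2co p" and J = "jbr (tco p - xnorm p)",
     OF r rr jbr_ge(1) jbr_ge(2)]
  have Z1: "Zf 1 g p = x1co p / xnorm p * pd 0 g p + pd 1 g p" by (simp add: Zf_def)
  have Z2: "Zf 2 g p = x2co p / xnorm p * pd 0 g p + pd 2 g p" by (simp add: Zf_def)
  consider "k = 0" | "k = 1" | "k = 2" | "k = 3" | "k = 4" | "k = 5" | "k = 6" using k by arith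
  then show ?thesis
  proof cases
    case 1
    have "Gam k g p = tco p * pd 0 g p + x1co p * pd 1 g p + x2co p * pd 2 g p" using 1 by (simp add: Gam_def)
    then show ?thesis unfolding Z1 Z2 using B(1) by simp
  next
    case 2
    have "Gam k g p = tco p * pd 1 g p + x1co p * pd 0 g p" using 2 by (simp add: Gam_def)
    then show ?thesis unfolding Z1 Z2 using B(2) by simp
  next
    case 3
    have "Gam k g p = tco p * pd 2 g p + x2co p * pd 0 g p" using 3 by (simp add: Gam_def)
    then show ?thesis unfolding Z1 Z2 using B(3) by simp
  next
    case 4
    have "Gam k g p = x1co p * pd 2 g p - x2co p * pd 1 g p" using 4 by (simp add: Gam_def)
    then show ?thesis unfolding Z1 Z2 using B(4) by simp
  next
    case 5
    have "Gam k g p = pd 0 g p" using 5 by (simp add: Gam_def)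
    then show ?thesis unfolding Z1 Z2 using B(5) by simp
  next
    case 6
    have "Gam k g p = pd 1 g p" using 6 by (simp add: Gam_def)
    then show ?thesis unfolding Z1 Z2 using B(6) by simp
  next
    case 7
    have "Gam k g p = pd 2 g p" using 7 by (simp add: Gam_def)
    then show ?thesis unfolding Z1 Z2 using B(7) by simp
  qed
qed

lemma length_wordof_gen: "length (concat (map (\<lambda>k. replicate (\<alpha> k) k) ks)) = sum_list (map \<alpha> ks)"
  by (induction ks) auto

lemma length_wordof: "length (wordof \<alpha>) = sz \<alpha>"
  unfolding wordof_def sz_def length_wordof_gen
  by (simp add: interv_sum_list_conv_sum_set_nat lessThan_atLeast0)

lemma set_wordof: "set (wordof \<alpha>) \<subseteq> {..<7}"
  unfolding wordof_def by auto

lemma sz_multi: "\<alpha> \<in> multi s \<Longrightarrow> sz \<alpha> \<le> s"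
  unfolding sz_def by (rule multiD1)


definition WW :: "nat \<Rightarrow> real \<Rightarrow> bool" where
  "WW l K \<longleftrightarrow> K \<ge> 0 \<and> (\<forall>\<psi>. smooth3 \<psi> \<longrightarrow> (\<forall>j<7. \<forall>w. length w = l \<longrightarrow> set w \<subseteq> {..<7} \<longrightarrow>
      SPG (BB (Suc l)) (GB \<psi>) (foldr Gam w (Gam j \<psi>)) K))"

lemma WW_ex: "\<exists>K. WW l K"
  using words[of l] unfolding WW_def by blast

lemma ZN_split: "ZNormS s f p = (\<Sum>\<alpha>\<in>multi s. \<bar>Zf 1 (GamA \<alpha> f) p\<bar>) + (\<Sum>\<alpha>\<in>multi s. \<bar>Zf 2 (GamA \<alpha> f) p\<bar>)"
  unfolding ZNormS_def by simp

theorem lemma2p6: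
  fixes s :: nat
  shows "\<exists>C>0. \<forall>\<psi>. smooth3 \<psi> \<longrightarrow>
           (\<forall>t x1 x2. (x1, x2) \<noteq> (0, 0) \<longrightarrow>
              GamNormS s \<psi> (t, x1, x2)
                \<le> C * xnorm (t, x1, x2) * ZNormS s \<psi> (t, x1, x2)
                  + C * jbr (t - xnorm (t, x1, x2)) * DNormS s \<psi> (t, x1, x2))"
proof -
  have "\<forall>l. \<exists>K. WW l K" using WW_ex by blast
  then obtain Kf where Kf: "\<forall>l. WW l (Kf l)" by (rule choice[THEN exE]) blast
  obtain KD where KD: "KD \<ge> 0" "DD s KD" using dlemma by blast
  define Kw where "Kw = (\<Sum>l\<le>s. Kf l)"
  have Kf0: "Kf l \<ge> 0" for l using Kf unfolding WW_def by blast
  have Kw0: "Kw \<ge> 0" unfolding Kw_def using Kf0 by (simp add: sum_nonneg)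
  have Kfw: "Kf l \<le> Kw" if "l \<le> s" for l
    unfolding Kw_def using that Kf0 by (intro member_le_sum) auto
  define A where "A = 7 * real (card (multi s)) * Kw"
  have A0: "A \<ge> 0" unfolding A_def using Kw0 by simp
  define C where "C = A * (1 + 3 * KD) + 1"
  have "0 \<le> A * (1 + 3 * KD)" using A0 KD(1) by simp
  then have C0: "C > 0" unfolding C_def by linarith
  have CA: "A \<le> C" unfolding C_def using A0 KD(1) by (simp add: algebra_simps)
  have CAD: "A * (3 * KD) \<le> C" unfolding C_def using A0 KD(1) by (simp add: algebra_simps)
  show ?thesis
  proof (intro exI[of _ C] conjI allI impI)
    show "C > 0" by (rule C0)
  next
    fix \<psi> :: "pt \<Rightarrow> real" and t x1 x2 :: real
    assume \<psi>: "smooth3 \<psi>" and x: "(x1, x2) \<noteq> (0, 0)"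
    define p where "p = (t, x1, x2)"
    define r where "r = xnorm p"
    define ZN where "ZN = ZNormS s \<psi> p"
    define DN where "DN = DNormS s \<psi> p"
    define J where "J = jbr (t - r)"
    have "x1\<^sup>2 + x2\<^sup>2 > 0" using x by (auto simp: sum_power2_gt_zero_iff)
    then have r: "r > 0" unfolding r_def p_def xnorm_def x1co_def x2co_def by simp
    have tp: "tco p = t" unfolding p_def tco_def by simp
    have ZN0: "ZN \<ge> 0" unfolding ZN_def ZNormS_def by (intro sum_nonneg) auto
    have DN0: "DN \<ge> 0" unfolding DN_def DNormS_def normS_def by (intro sum_nonneg) auto
    have J1: "J \<ge> 1" unfolding J_def by (rule jbr_ge(2))
    define M where "M = r * ZN + J * (3 * KD * DN)"
    have M0: "M \<ge> 0" unfolding M_def using r ZN0 J1 KD(1) DN0 by simp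
    have DNb: "\<forall>x\<in>DB s. \<bar>Db \<psi> x p\<bar> \<le> DN"
    proof
      fix x assume x: "x \<in> DB s"
      have m: "fst x < 3" "snd x \<in> multi s" using x unfolding DB_def by auto
      have "\<bar>Db \<psi> x p\<bar> \<le> normS s (pd (fst x) \<psi>) p"
        unfolding Db_def normS_def using m(2) finite_multi
        by (intro member_le_sum[where f = "\<lambda>\<alpha>. \<bar>GamA \<alpha> (pd (fst x) \<psi>) p\<bar>"]) auto
      also have "\<dots> \<le> DN"
        unfolding DN_def DNormS_def using m(1)
        by (intro member_le_sum[where f = "\<lambda>j. normS s (pd j \<psi>) p"]) (auto simp: normS_def intro: sum_nonneg)
      finally show "\<bar>Db \<psi> x p\<bar> \<le> DN" .
    qed
    have Ab: "\<forall>\<beta>\<in>BB (Suc s). \<bar>GB \<psi> \<beta> p\<bar> \<le> M"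
    proof
      fix \<beta> assume b: "\<beta> \<in> BB (Suc s)"
      have bm: "\<beta> \<in> multi (Suc s)" and nz: "\<beta> \<noteq> (\<lambda>_. 0)" using b unfolding BB_def by auto
      obtain k \<beta>' where kb: "k < 7" "\<forall>m<k. \<beta>' m = 0" "\<beta>' \<in> multi s" "\<beta> = \<beta>'(k := Suc (\<beta>' k))"
        using peel[OF bm nz] by blast
      let ?g = "GamA \<beta>' \<psi>"
      have eb: "GB \<psi> \<beta> = Gam k ?g" unfolding GB_def kb(4) by (rule GamA_peel[OF kb(1,2)])
      have r': "xnorm p > 0" using r unfolding r_def .
      have G: "\<bar>Gam k ?g p\<bar> \<le> r * (\<bar>Zf 1 ?g p\<bar> + \<bar>Zf 2 ?g p\<bar>)
            + J * (\<bar>pd 0 ?g p\<bar> + \<bar>pd 1 ?g p\<bar> + \<bar>pd 2 ?g p\<bar>)"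
        using Gam_Zbound[OF r' kb(1), of ?g] unfolding J_def r_def tp .
      have z1: "\<bar>Zf 1 ?g p\<bar> \<le> (\<Sum>\<alpha>\<in>multi s. \<bar>Zf 1 (GamA \<alpha> \<psi>) p\<bar>)"
        using kb(3) finite_multi by (intro member_le_sum[where f = "\<lambda>\<alpha>. \<bar>Zf 1 (GamA \<alpha> \<psi>) p\<bar>"]) auto
      have z2: "\<bar>Zf 2 ?g p\<bar> \<le> (\<Sum>\<alpha>\<in>multi s. \<bar>Zf 2 (GamA \<alpha> \<psi>) p\<bar>)"
        using kb(3) finite_multi by (intro member_le_sum[where f = "\<lambda>\<alpha>. \<bar>Zf 2 (GamA \<alpha> \<psi>) p\<bar>"]) auto
      have zz: "\<bar>Zf 1 ?g p\<bar> + \<bar>Zf 2 ?g p\<bar> \<le> ZN"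
        unfolding ZN_def ZN_split using z1 z2 by linarith
      have pdb: "\<bar>pd i ?g p\<bar> \<le> KD * DN" if i: "i < 3" for i
      proof -
        have "SPG (DB s) (Db \<psi>) (pd i ?g) KD" using KD(2) \<psi> i kb(3) unfolding DD_def by blast
        then show ?thesis by (rule SPG_bound) (use DNb DN0 in auto)
      qed
      have "\<bar>pd 0 ?g p\<bar> + \<bar>pd 1 ?g p\<bar> + \<bar>pd 2 ?g p\<bar> \<le> 3 * KD * DN"
        using pdb[of 0] pdb[of 1] pdb[of 2] by simp
      then have j: "J * (\<bar>pd 0 ?g p\<bar> + \<bar>pd 1 ?g p\<bar> + \<bar>pd 2 ?g p\<bar>) \<le> J * (3 * KD * DN)"
        using J1 by (intro mult_left_mono) auto
      have rz: "r * (\<bar>Zf 1 ?g p\<bar> + \<bar>Zf 2 ?g p\<bar>) \<le> r * ZN"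
        using r zz by (intro mult_left_mono) auto
      show "\<bar>GB \<psi> \<beta> p\<bar> \<le> M" unfolding eb M_def using G j rz by linarith
    qed
    have Bb: "\<bar>GamA \<alpha> (Gam j \<psi>) p\<bar> \<le> Kw * M" if j: "j < 7" and a: "\<alpha> \<in> multi s" for j \<alpha>
    proof -
      let ?l = "sz \<alpha>"
      have ls: "?l \<le> s" by (rule sz_multi[OF a])
      have "SPG (BB (Suc ?l)) (GB \<psi>) (foldr Gam (wordof \<alpha>) (Gam j \<psi>)) (Kf ?l)"
        using Kf \<psi> j length_wordof[of \<alpha>] set_wordof[of \<alpha>] unfolding WW_def by blast
      then have "SPG (BB (Suc s)) (GB \<psi>) (GamA \<alpha> (Gam j \<psi>)) (Kf ?l)"
        unfolding GamA_word[symmetric] by (rule SPG_subset[OF finite_BB BB_mono, rotated]) (use ls in simp)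
      from SPG_bound[OF this Ab M0] have "\<bar>GamA \<alpha> (Gam j \<psi>) p\<bar> \<le> Kf ?l * M" .
      also have "\<dots> \<le> Kw * M" using Kfw[OF ls] M0 by (rule mult_right_mono)
      finally show ?thesis .
    qed
    have "GamNormS s \<psi> p = (\<Sum>j<7. \<Sum>\<alpha>\<in>multi s. \<bar>GamA \<alpha> (Gam j \<psi>) p\<bar>)"
      unfolding GamNormS_def normS_def ..
    also have "\<dots> \<le> (\<Sum>j<(7::nat). \<Sum>\<alpha>\<in>multi s. Kw * M)"
      using Bb by (intro sum_mono) auto
    also have "\<dots> = A * M" unfolding A_def by simp
    also have "\<dots> = A * (r * ZN) + A * (3 * KD) * (J * DN)" unfolding M_def by (simp add: algebra_simps)
    also have "\<dots> \<le> C * (r * ZN) + C * (J * DN)"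
    proof -
      have "A * (r * ZN) \<le> C * (r * ZN)" using CA r ZN0 by (intro mult_right_mono) auto
      moreover have "A * (3 * KD) * (J * DN) \<le> C * (J * DN)" using CAD J1 DN0 by (intro mult_right_mono) auto
      ultimately show ?thesis by linarith
    qed
    finally have "GamNormS s \<psi> p \<le> C * r * ZN + C * J * DN" by (simp add: algebra_simps)
    then show "GamNormS s \<psi> (t, x1, x2)
                \<le> C * xnorm (t, x1, x2) * ZNormS s \<psi> (t, x1, x2)
                  + C * jbr (t - xnorm (t, x1, x2)) * DNormS s \<psi> (t, x1, x2)"
      unfolding p_def r_def ZN_def DN_def J_def .
  qed
qed


end
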